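(* Let $A_0(t)$ be an operator-valued function (on a finite-dimensional space) that is analytic in $t$ over the reals, and let $\alpha$ be a real scaling factor. Define $\alpha A_k(t)$ recursively by $$\alpha A_{k+1}(t)=\sum_{m=1}^\infty(-1)^m\frac{m}{(m+1)!}\,\mathrm{ad}^m_{\int_0^t\alpha A_k(s)ds}\big[\alpha A_k(t)\big].$$ If $\alpha A_k(t)=O(\alpha^qt^p)$, then $\alpha A_{k+1}(t)=O(\alpha^{2q}t^{2p+2})$.
   Context: $\mathrm{ad}_X(Y)=[X,Y]=XY-YX$ and $\mathrm{ad}_X^m(Y)=\mathrm{ad}_X(\mathrm{ad}_X^{m-1}(Y))$. The asymptotic notation refers to small $\alpha$ and $t$. *)

theory Defs
  imports "HOL-Analysis.Analysis"
begin

definition real_analytic :: "(real \<Rightarrow> 'a::real_normed_vector) \<Rightarrow> bool" where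
  "real_analytic f \<longleftrightarrow>
     (\<forall>t0. \<exists>r>0. \<exists>c::nat \<Rightarrow> 'a. \<forall>t. \<bar>t - t0\<bar> < r \<longrightarrow>
        (\<lambda>n. (t - t0) ^ n *\<^sub>R c n) sums f t)"

definition ad :: "'a::ring \<Rightarrow> 'a \<Rightarrow> 'a" where
  "ad X Y = X * Y - Y * X"

definition int0 :: "(real \<Rightarrow> 'a::real_normed_vector) \<Rightarrow> real \<Rightarrow> 'a" where
  "int0 f t = (if 0 \<le> t then integral {0..t} f else - integral {t..0} f)"

text \<open>One step of the recursion:
  sum over m >= 1 of (-1)^m m/(m+1)! ad^m_{int_0^t B}(B t); index shifted m = Suc j.\<close>
definition magnus_step :: "(real \<Rightarrow> 'a::{real_normed_algebra,banach}) \<Rightarrow> real \<Rightarrow> 'a" where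
  "magnus_step B t =
     (\<Sum>j. ((-1) ^ Suc j * real (Suc j) / fact (Suc j + 1)) *\<^sub>R ((ad (int0 B t) ^^ Suc j) (B t)))"

fun alphaA :: "(real \<Rightarrow> 'a::{real_normed_algebra,banach}) \<Rightarrow> real \<Rightarrow> nat \<Rightarrow> real \<Rightarrow> 'a" where
  "alphaA A0 \<alpha> 0 t = \<alpha> *\<^sub>R A0 t"
| "alphaA A0 \<alpha> (Suc k) t = magnus_step (alphaA A0 \<alpha> k) t"

definition bigO_at0 :: "(real \<Rightarrow> real \<Rightarrow> 'a::real_normed_vector) \<Rightarrow> nat \<Rightarrow> nat \<Rightarrow> bool" where
  "bigO_at0 f q p \<longleftrightarrow>
     (\<exists>C. \<forall>\<^sub>F x in nhds (0::real, 0::real). norm (f (fst x) (snd x)) \<le> C * \<bar>fst x\<bar> ^ q * \<bar>snd x\<bar> ^ p)"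

end

theory Submission
  imports Defs
begin

datatype ix = Lx nat | Px ix ix | Tx nat ix | Sx bool ix

definition rep :: "(real \<Rightarrow> real \<Rightarrow> 'a::real_normed_vector) \<Rightarrow> real \<Rightarrow> ix set \<Rightarrow> (ix \<Rightarrow> 'a) \<Rightarrow> (ix \<Rightarrow> nat) \<Rightarrow> (ix \<Rightarrow> nat) \<Rightarrow> bool" where
  "rep F r I c u v \<longleftrightarrow> r > 0 \<and> (\<lambda>x. norm (c x) * r ^ (u x + v x)) summable_on I \<and>
     (\<forall>a t. \<bar>a\<bar> \<le> r \<longrightarrow> \<bar>t\<bar> \<le> r \<longrightarrow> ((\<lambda>x. (a ^ u x * t ^ v x) *\<^sub>R c x) has_sum F a t) I)"

definition mj :: "real \<Rightarrow> ix set \<Rightarrow> (ix \<Rightarrow> 'a::real_normed_vector) \<Rightarrow> (ix \<Rightarrow> nat) \<Rightarrow> (ix \<Rightarrow> nat) \<Rightarrow> real" where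
  "mj r I c u v = infsum (\<lambda>x. norm (c x) * r ^ (u x + v x)) I"

lemma term_le:
  assumes "\<bar>a\<bar> \<le> r" "\<bar>t\<bar> \<le> r"
  shows "norm ((a ^ m * t ^ n) *\<^sub>R (y::'a::real_normed_vector)) \<le> norm y * r ^ (m + n)"
proof -
  have "\<bar>a\<bar> ^ m * \<bar>t\<bar> ^ n \<le> r ^ m * r ^ n"
    using assms by (intro mult_mono power_mono) auto
  have "norm ((a ^ m * t ^ n) *\<^sub>R y) = (\<bar>a\<bar> ^ m * \<bar>t\<bar> ^ n) * norm y"
    by (simp add: abs_mult power_abs)
  also have "\<dots> \<le> (r ^ m * r ^ n) * norm y"
    by (rule mult_right_mono) (use \<open>\<bar>a\<bar> ^ m * \<bar>t\<bar> ^ n \<le> r ^ m * r ^ n\<close> in auto)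
  also have "\<dots> = norm y * r ^ (m + n)"
    by (simp add: power_add)
  finally show ?thesis .
qed

lemma rep_abs:
  assumes "rep F r I c u v" "\<bar>a\<bar> \<le> r" "\<bar>t\<bar> \<le> r"
  shows "(\<lambda>x. norm ((a ^ u x * t ^ v x) *\<^sub>R c x)) summable_on I"
proof (rule Infinite_Sum.abs_summable_on_comparison_test'[where g="\<lambda>x. norm (c x) * r ^ (u x + v x)"
       and f="\<lambda>x. (a ^ u x * t ^ v x) *\<^sub>R c x"])
  show "(\<lambda>x. norm (c x) * r ^ (u x + v x)) summable_on I" using assms unfolding rep_def by auto
  show "norm ((a ^ u x * t ^ v x) *\<^sub>R c x) \<le> norm (c x) * r ^ (u x + v x)" for x
    using assms(2,3) by (rule term_le)
qed

lemma rep_mj_nonneg: "rep F r I c u v \<Longrightarrow> 0 \<le> mj r I c u v"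
  unfolding mj_def rep_def by (intro infsum_nonneg) auto

lemma rep_norm:
  assumes "rep F r I c u v" "\<bar>a\<bar> \<le> r" "\<bar>t\<bar> \<le> r"
  shows "norm (F a t) \<le> mj r I c u v"
proof -
  have h: "((\<lambda>x. norm (c x) * r ^ (u x + v x)) has_sum mj r I c u v) I"
    using assms unfolding rep_def mj_def by auto
  show ?thesis
  proof (rule norm_infsum_le[where f="\<lambda>x. (a ^ u x * t ^ v x) *\<^sub>R c x" and X=I])
    show "((\<lambda>x. (a ^ u x * t ^ v x) *\<^sub>R c x) has_sum F a t) I" using assms unfolding rep_def by auto
    show "norm ((a ^ u x * t ^ v x) *\<^sub>R c x) \<le> norm (c x) * r ^ (u x + v x)" for x
      using assms(2,3) by (rule term_le)
  qed (rule h)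
qed

lemma rep_cong:
  assumes "rep F r I c u v" "\<And>a t. \<bar>a\<bar> \<le> r \<Longrightarrow> \<bar>t\<bar> \<le> r \<Longrightarrow> F a t = G a t"
  shows "rep G r I c u v"
  using assms unfolding rep_def by auto

lemma has_sum_prod_abs:
  fixes f g :: "_ \<Rightarrow> 'a::{real_normed_algebra,banach}"
  assumes "(f has_sum A) I" "(g has_sum B) J" "(\<lambda>x. norm (f x)) summable_on I" "(\<lambda>x. norm (g x)) summable_on J"
  shows "((\<lambda>(x,y). f x * g y) has_sum A * B) (I \<times> J)"
    and "(\<lambda>z. norm ((\<lambda>(x,y). f x * g y) z)) summable_on (I \<times> J)"
proof -
  have nn: "((\<lambda>x. norm (f x)) has_sum infsum (\<lambda>x. norm (f x)) I) I"
           "((\<lambda>x. norm (g x)) has_sum infsum (\<lambda>x. norm (g x)) J) J"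
    using assms by auto
  have s1: "(\<lambda>(x,y). norm (f x) * norm (g y)) summable_on (I \<times> J)"
  proof (rule summable_on_SigmaI[where g="\<lambda>x. norm (f x) * infsum (\<lambda>y. norm (g y)) J"])
    show "((\<lambda>y. (\<lambda>(x, y). norm (f x) * norm (g y)) (x, y)) has_sum norm (f x) * infsum (\<lambda>x. norm (g x)) J) J" for x
      using has_sum_cmult_right[OF nn(2), of "norm (f x)"] by simp
    show "(\<lambda>x. norm (f x) * infsum (\<lambda>y. norm (g y)) J) summable_on I"
      using has_sum_cmult_left[OF nn(1)] by (auto simp: summable_on_def)
  qed auto
  show ab: "(\<lambda>z. norm ((\<lambda>(x,y). f x * g y) z)) summable_on (I \<times> J)"
    by (rule Infinite_Sum.abs_summable_on_comparison_test'[OF s1]) (auto intro: norm_mult_ineq)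
  show "((\<lambda>(x,y). f x * g y) has_sum A * B) (I \<times> J)"
  proof (rule has_sum_SigmaI[where g="\<lambda>x. f x * B"])
    show "((\<lambda>y. (\<lambda>(x, y). f x * g y) (x, y)) has_sum f x * B) J" for x
      using has_sum_cmult_right[OF assms(2)] by simp
    show "((\<lambda>x. f x * B) has_sum A * B) I"
      using has_sum_cmult_left[OF assms(1)] by simp
    show "(\<lambda>(x, y). f x * g y) summable_on I \<times> J"
      using ab by (rule abs_summable_summable)
  qed
qed

definition pc :: "(ix \<Rightarrow> 'a) \<Rightarrow> (ix \<Rightarrow> 'a) \<Rightarrow> ix \<Rightarrow> 'a::times" where
  "pc f g z = (case z of Px x y \<Rightarrow> f x * g y | _ \<Rightarrow> undefined)"
definition pn :: "(ix \<Rightarrow> nat) \<Rightarrow> (ix \<Rightarrow> nat) \<Rightarrow> ix \<Rightarrow> nat" where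
  "pn f g z = (case z of Px x y \<Rightarrow> f x + g y | _ \<Rightarrow> undefined)"
definition sc :: "(ix \<Rightarrow> 'a) \<Rightarrow> (ix \<Rightarrow> 'a) \<Rightarrow> ix \<Rightarrow> 'a" where
  "sc f g z = (case z of Sx b x \<Rightarrow> (if b then f x else g x) | _ \<Rightarrow> undefined)"

lemma pc_P[simp]: "pc f g (Px x y) = f x * g y" by (simp add: pc_def)
lemma pn_P[simp]: "pn f g (Px x y) = f x + g y" by (simp add: pn_def)
lemma sc_S[simp]: "sc f g (Sx b x) = (if b then f x else g x)" by (simp add: sc_def)

lemma inj_P: "inj_on (\<lambda>(x,y). Px x y) A" by (auto simp: inj_on_def)

lemma rep_mult:
  fixes F G :: "real \<Rightarrow> real \<Rightarrow> 'a::{real_normed_algebra,banach}"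
  assumes F: "rep F r I c u v" and G: "rep G r J d u' v'"
  shows "rep (\<lambda>a t. F a t * G a t) r ((\<lambda>(x,y). Px x y) ` (I \<times> J)) (pc c d) (pn u u') (pn v v')"
    and "mj r ((\<lambda>(x,y). Px x y) ` (I \<times> J)) (pc c d) (pn u u') (pn v v') \<le> mj r I c u v * mj r J d u' v'"
proof -
  have r: "r > 0" using F unfolding rep_def by auto
  define f where "f x = norm (c x) * r ^ (u x + v x)" for x
  define g where "g y = norm (d y) * r ^ (u' y + v' y)" for y
  have fs: "(f has_sum mj r I c u v) I" using F unfolding rep_def mj_def f_def by auto
  have gs: "(g has_sum mj r J d u' v') J" using G unfolding rep_def mj_def g_def by auto
  have nf: "norm (f x) = f x" for x using r by (simp add: f_def)
  have ng: "norm (g x) = g x" for x using r by (simp add: g_def)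
  have fa: "(\<lambda>x. norm (f x)) summable_on I" using fs unfolding nf by (auto simp: summable_on_def)
  have ga: "(\<lambda>x. norm (g x)) summable_on J" using gs unfolding ng by (auto simp: summable_on_def)
  have pr: "((\<lambda>(x,y). f x * g y) has_sum mj r I c u v * mj r J d u' v') (I \<times> J)"
    by (rule has_sum_prod_abs(1)[OF fs gs fa ga])
  define h where "h z = norm (pc c d z) * r ^ (pn u u' z + pn v v' z)" for z
  have hle: "(h \<circ> (\<lambda>(x,y). Px x y)) z \<le> (\<lambda>(x,y). f x * g y) z" for z
  proof (cases z)
    case (Pair x y)
    have "norm (c x * d y) * r ^ (u x + u' y + (v x + v' y)) \<le> (norm (c x) * norm (d y)) * r ^ (u x + u' y + (v x + v' y))"
      using r by (intro mult_right_mono norm_mult_ineq) auto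
    also have "\<dots> = f x * g y" unfolding f_def g_def by (simp add: power_add algebra_simps)
    finally show ?thesis using Pair by (simp add: h_def)
  qed
  have hnn: "0 \<le> (h \<circ> (\<lambda>(x,y). Px x y)) z" for z using r by (auto simp: h_def split: prod.splits)
  have hs: "(h \<circ> (\<lambda>(x,y). Px x y)) summable_on (I \<times> J)"
    by (rule summable_on_comparison_test[OF has_sum_imp_summable[OF pr]]) (use hle hnn in auto)
  have hs': "h summable_on ((\<lambda>(x,y). Px x y) ` (I \<times> J))"
    using hs by (simp add: summable_on_reindex[OF inj_P])
  have "infsum (h \<circ> (\<lambda>(x,y). Px x y)) (I \<times> J) \<le> infsum (\<lambda>(x,y). f x * g y) (I \<times> J)"
    by (rule infsum_mono[OF hs has_sum_imp_summable[OF pr]]) (use hle in auto)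
  also have "\<dots> = mj r I c u v * mj r J d u' v'" using pr by (rule infsumI)
  finally show "mj r ((\<lambda>(x,y). Px x y) ` (I \<times> J)) (pc c d) (pn u u') (pn v v') \<le> mj r I c u v * mj r J d u' v'"
    unfolding mj_def h_def[symmetric] by (simp add: infsum_reindex[OF inj_P])
  show "rep (\<lambda>a t. F a t * G a t) r ((\<lambda>(x,y). Px x y) ` (I \<times> J)) (pc c d) (pn u u') (pn v v')"
    unfolding rep_def
  proof (intro conjI allI impI)
    show "0 < r" by (rule r)
    show "(\<lambda>x. norm (pc c d x) * r ^ (pn u u' x + pn v v' x)) summable_on (\<lambda>(x, y). Px x y) ` (I \<times> J)"
      using hs' unfolding h_def .
    fix a t :: real assume at: "\<bar>a\<bar> \<le> r" "\<bar>t\<bar> \<le> r"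
    have p2: "((\<lambda>(x,y). ((a ^ u x * t ^ v x) *\<^sub>R c x) * ((a ^ u' y * t ^ v' y) *\<^sub>R d y)) has_sum F a t * G a t) (I \<times> J)"
      by (rule has_sum_prod_abs(1)) (use F G at rep_abs[OF F at] rep_abs[OF G at] in \<open>auto simp: rep_def\<close>)
    have eq: "((\<lambda>z. (a ^ pn u u' z * t ^ pn v v' z) *\<^sub>R pc c d z) \<circ> (\<lambda>(x,y). Px x y)) = 
        (\<lambda>(x,y). ((a ^ u x * t ^ v x) *\<^sub>R c x) * ((a ^ u' y * t ^ v' y) *\<^sub>R d y))"
      by (auto simp: fun_eq_iff power_add algebra_simps)
    show "((\<lambda>z. (a ^ pn u u' z * t ^ pn v v' z) *\<^sub>R pc c d z) has_sum F a t * G a t) ((\<lambda>(x, y). Px x y) ` (I \<times> J))"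
      by (subst has_sum_reindex[OF inj_P]) (use p2 eq in simp)
  qed
qed

lemma inj_S: "inj (Sx b)" by (auto simp: inj_def)

lemma rep_add:
  fixes F G :: "real \<Rightarrow> real \<Rightarrow> 'a::banach"
  assumes F: "rep F r I c u v" and G: "rep G r J d u' v'"
  shows "rep (\<lambda>a t. F a t + G a t) r (Sx True ` I \<union> Sx False ` J) (sc c d) (sc u u') (sc v v')"
    and "mj r (Sx True ` I \<union> Sx False ` J) (sc c d) (sc u u') (sc v v') = mj r I c u v + mj r J d u' v'"
proof -
  have r: "r > 0" using F unfolding rep_def by auto
  have disj: "Sx True ` I \<inter> Sx False ` J = {}" by auto
  have reT: "(h has_sum s) (Sx True ` I) \<longleftrightarrow> ((h \<circ> Sx True) has_sum s) I" for h and s :: "'b::topological_comm_monoid_add"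
    by (rule has_sum_reindex) (simp add: inj_on_def)
  have reF: "(h has_sum s) (Sx False ` J) \<longleftrightarrow> ((h \<circ> Sx False) has_sum s) J" for h and s :: "'b::topological_comm_monoid_add"
    by (rule has_sum_reindex) (simp add: inj_on_def)
  define h where "h = (\<lambda>z. norm (sc c d z) * r ^ (sc u u' z + sc v v' z))"
  have h1: "(h has_sum mj r I c u v) (Sx True ` I)"
    unfolding reT using F by (simp add: rep_def mj_def h_def o_def)
  have h2: "(h has_sum mj r J d u' v') (Sx False ` J)"
    unfolding reF using G by (simp add: rep_def mj_def h_def o_def)
  have hs: "(h has_sum (mj r I c u v + mj r J d u' v')) (Sx True ` I \<union> Sx False ` J)"
    by (rule has_sum_Un_disjoint[OF h1 h2 disj])
  show "mj r (Sx True ` I \<union> Sx False ` J) (sc c d) (sc u u') (sc v v') = mj r I c u v + mj r J d u' v'"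
    using infsumI[OF hs] by (simp add: mj_def h_def)
  show "rep (\<lambda>a t. F a t + G a t) r (Sx True ` I \<union> Sx False ` J) (sc c d) (sc u u') (sc v v')"
    unfolding rep_def
  proof (intro conjI allI impI)
    show "0 < r" by (rule r)
    show "(\<lambda>x. norm (sc c d x) * r ^ (sc u u' x + sc v v' x)) summable_on (Sx True ` I \<union> Sx False ` J)"
      using hs unfolding h_def by (auto simp: summable_on_def)
    fix a t :: real assume at: "\<bar>a\<bar> \<le> r" "\<bar>t\<bar> \<le> r"
    define k where "k z = (a ^ sc u u' z * t ^ sc v v' z) *\<^sub>R sc c d z" for z
    have k1: "(k has_sum F a t) (Sx True ` I)"
      unfolding reT using F at by (simp add: rep_def k_def o_def)
    have k2: "(k has_sum G a t) (Sx False ` J)"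
      unfolding reF using G at by (simp add: rep_def k_def o_def)
    show "((\<lambda>x. (a ^ sc u u' x * t ^ sc v v' x) *\<^sub>R sc c d x) has_sum F a t + G a t) (Sx True ` I \<union> Sx False ` J)"
      using has_sum_Un_disjoint[OF k1 k2 disj] unfolding k_def .
  qed
qed

lemma rep_scale:
  fixes F :: "real \<Rightarrow> real \<Rightarrow> 'a::banach"
  assumes F: "rep F r I c u v"
  shows "rep (\<lambda>a t. k *\<^sub>R F a t) r I (\<lambda>x. k *\<^sub>R c x) u v"
    and "mj r I (\<lambda>x. k *\<^sub>R c x) u v = \<bar>k\<bar> * mj r I c u v"
proof -
  have r: "r > 0" using F unfolding rep_def by auto
  have h0: "((\<lambda>x. norm (c x) * r ^ (u x + v x)) has_sum mj r I c u v) I"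
    using F unfolding rep_def mj_def by auto
  have h1: "((\<lambda>x. norm (k *\<^sub>R c x) * r ^ (u x + v x)) has_sum \<bar>k\<bar> * mj r I c u v) I"
    using has_sum_cmult_right[OF h0, of "\<bar>k\<bar>"] by (simp add: mult.assoc)
  show "mj r I (\<lambda>x. k *\<^sub>R c x) u v = \<bar>k\<bar> * mj r I c u v"
    using infsumI[OF h1] by (simp add: mj_def)
  show "rep (\<lambda>a t. k *\<^sub>R F a t) r I (\<lambda>x. k *\<^sub>R c x) u v"
    unfolding rep_def
  proof (intro conjI allI impI)
    show "0 < r" by (rule r)
    show "(\<lambda>x. norm (k *\<^sub>R c x) * r ^ (u x + v x)) summable_on I"
      using h1 by (auto simp: summable_on_def)
    fix a t :: real assume at: "\<bar>a\<bar> \<le> r" "\<bar>t\<bar> \<le> r"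
    have "((\<lambda>x. (a ^ u x * t ^ v x) *\<^sub>R c x) has_sum F a t) I" using F at by (simp add: rep_def)
    from has_sum_scaleR[OF this, of k]
    show "((\<lambda>x. (a ^ u x * t ^ v x) *\<^sub>R k *\<^sub>R c x) has_sum k *\<^sub>R F a t) I"
      by (simp add: scaleR_scaleR mult.commute)
  qed
qed

lemma rep_ad:
  fixes X Z :: "real \<Rightarrow> real \<Rightarrow> 'a::{real_normed_algebra,banach}"
  assumes X: "rep X r I c u v" and Z: "rep Z r J d u' v'"
  shows "\<exists>K e w z. rep (\<lambda>a t. ad (X a t) (Z a t)) r K e w z \<and> mj r K e w z \<le> 2 * mj r I c u v * mj r J d u' v'"
proof -
  note m1 = rep_mult[OF X Z]
  note m2 = rep_mult[OF Z X]
  note s2 = rep_scale[OF m2(1), of "-1"]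
  note a = rep_add[OF m1(1) s2(1)]
  have eqad: "\<And>a t. \<bar>a\<bar> \<le> r \<Longrightarrow> \<bar>t\<bar> \<le> r \<Longrightarrow> X a t * Z a t + (-1) *\<^sub>R (Z a t * X a t) = ad (X a t) (Z a t)"
    by (simp add: ad_def)
  note ad1 = rep_cong[OF a(1) eqad]
  have c1: "mj r J d u' v' * mj r I c u v = mj r I c u v * mj r J d u' v'" by (rule mult.commute)
  have c2: "\<bar>-1::real\<bar> = 1" by simp
  have b: "mj r (Sx True ` ((\<lambda>(x,y). Px x y) ` (I \<times> J)) \<union> Sx False ` ((\<lambda>(x,y). Px x y) ` (J \<times> I)))
      (sc (pc c d) (\<lambda>x. (-1) *\<^sub>R pc d c x)) (sc (pn u u') (pn u' u)) (sc (pn v v') (pn v' v))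
      \<le> 2 * mj r I c u v * mj r J d u' v'"
    unfolding a(2) s2(2) c2 using m1(2) m2(2) c1 by linarith
  show ?thesis using ad1 b by blast
qed

lemma rep_adpow:
  fixes X Y :: "real \<Rightarrow> real \<Rightarrow> 'a::{real_normed_algebra,banach}"
  assumes X: "rep X r I c u v" and Y: "rep Y r J d u' v'"
  shows "\<exists>K e w z. rep (\<lambda>a t. (ad (X a t) ^^ m) (Y a t)) r K e w z \<and> mj r K e w z \<le> (2 * mj r I c u v) ^ m * mj r J d u' v'"
proof (induction m)
  case 0
  then show ?case using Y by (intro exI[of _ J] exI[of _ d] exI[of _ u'] exI[of _ v']) simp
next
  case (Suc m)
  then obtain K e w z where K: "rep (\<lambda>a t. (ad (X a t) ^^ m) (Y a t)) r K e w z"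
    and Km: "mj r K e w z \<le> (2 * mj r I c u v) ^ m * mj r J d u' v'" by blast
  obtain K' e' w' z' where K': "rep (\<lambda>a t. ad (X a t) ((ad (X a t) ^^ m) (Y a t))) r K' e' w' z'"
    and Km': "mj r K' e' w' z' \<le> 2 * mj r I c u v * mj r K e w z"
    using rep_ad[OF X K] by blast
  have "2 * mj r I c u v * mj r K e w z \<le> 2 * mj r I c u v * ((2 * mj r I c u v) ^ m * mj r J d u' v')"
    using Km rep_mj_nonneg[OF X] by (intro mult_left_mono) auto
  then have "mj r K' e' w' z' \<le> (2 * mj r I c u v) ^ Suc m * mj r J d u' v'"
    using Km' by (simp add: mult_ac)
  then show ?case using K' by auto
qed

definition tc :: "(nat \<Rightarrow> ix \<Rightarrow> 'a) \<Rightarrow> ix \<Rightarrow> 'a" where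
  "tc f z = (case z of Tx m x \<Rightarrow> f m x | _ \<Rightarrow> undefined)"
lemma tc_T[simp]: "tc f (Tx m x) = f m x" by (simp add: tc_def)
lemma inj_T: "inj_on (\<lambda>(m,x). Tx m x) A" by (auto simp: inj_on_def)

lemma nonneg_summable_on_nat:
  fixes f :: "nat \<Rightarrow> real"
  assumes "summable f" "\<And>n. 0 \<le> f n"
  shows "f summable_on UNIV"
proof -
  have "summable (\<lambda>n. norm (f n))" using assms by simp
  then have "(f has_sum suminf f) UNIV"
    using assms(1) by (intro norm_summable_imp_has_sum) (auto intro: summable_sums)
  then show ?thesis by (auto simp: summable_on_def)
qed

lemma rep_series:
  fixes Z :: "nat \<Rightarrow> real \<Rightarrow> real \<Rightarrow> 'a::banach"
  assumes Z: "\<And>m. rep (Z m) r (I m) (c m) (u m) (v m)"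
    and b: "\<And>m. \<bar>k m\<bar> * mj r (I m) (c m) (u m) (v m) \<le> b m" and bs: "summable b"
  shows "\<exists>K e w z. rep (\<lambda>a t. \<Sum>m. k m *\<^sub>R Z m a t) r K e w z"
proof -
  have r: "r > 0" using Z[of 0] unfolding rep_def by auto
  define K where "K = (\<lambda>(m,x). Tx m x) ` Sigma UNIV I"
  define e where "e = tc (\<lambda>m x. k m *\<^sub>R c m x)"
  define w where "w = tc u"
  define z where "z = tc v"
  define g where "g m = \<bar>k m\<bar> * mj r (I m) (c m) (u m) (v m)" for m
  have gnn: "0 \<le> g m" for m unfolding g_def using rep_mj_nonneg[OF Z] by auto
  have gsum: "summable g"
    by (rule summable_comparison_test[OF _ bs]) (use b gnn in \<open>auto simp: g_def\<close>)
  have gs: "g summable_on UNIV" by (rule nonneg_summable_on_nat[OF gsum gnn])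
  have inner: "((\<lambda>x. \<bar>k m\<bar> * (norm (c m x) * r ^ (u m x + v m x))) has_sum g m) (I m)" for m
  proof -
    have "((\<lambda>x. norm (c m x) * r ^ (u m x + v m x)) has_sum mj r (I m) (c m) (u m) (v m)) (I m)"
      using Z[of m] unfolding rep_def mj_def by auto
    from has_sum_cmult_right[OF this, of "\<bar>k m\<bar>"] show ?thesis by (simp add: g_def)
  qed
  have majS: "(\<lambda>(m,x). \<bar>k m\<bar> * (norm (c m x) * r ^ (u m x + v m x))) summable_on Sigma UNIV I"
    by (rule summable_on_SigmaI[OF _ gs]) (use inner r in auto)
  have "rep (\<lambda>a t. \<Sum>m. k m *\<^sub>R Z m a t) r K e w z"
  proof -
    show "rep (\<lambda>a t. \<Sum>m. k m *\<^sub>R Z m a t) r K e w z"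
      unfolding rep_def
    proof (intro conjI allI impI)
      show "0 < r" by (rule r)
      have "((\<lambda>y. norm (e y) * r ^ (w y + z y)) \<circ> (\<lambda>(m,x). Tx m x)) = (\<lambda>(m,x). \<bar>k m\<bar> * (norm (c m x) * r ^ (u m x + v m x)))"
        by (auto simp: fun_eq_iff e_def w_def z_def)
      then show "(\<lambda>y. norm (e y) * r ^ (w y + z y)) summable_on K"
        unfolding K_def by (subst summable_on_reindex[OF inj_T]) (use majS in simp)
      show "((\<lambda>y. (a ^ w y * t ^ z y) *\<^sub>R e y) has_sum (\<Sum>m. k m *\<^sub>R Z m a t)) K" if at: "\<bar>a\<bar> \<le> r" "\<bar>t\<bar> \<le> r" for a t
      proof -
      define f where "f = (\<lambda>(m,x). (a ^ u m x * t ^ v m x) *\<^sub>R (k m *\<^sub>R c m x))"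
      have fle: "norm (f y) \<le> (\<lambda>(m,x). \<bar>k m\<bar> * (norm (c m x) * r ^ (u m x + v m x))) y" for y
      proof (cases y)
        case (Pair m x)
        have "norm (f y) = \<bar>k m\<bar> * norm ((a ^ u m x * t ^ v m x) *\<^sub>R c m x)"
          using Pair by (simp add: f_def abs_mult)
        also have "\<dots> \<le> \<bar>k m\<bar> * (norm (c m x) * r ^ (u m x + v m x))"
          by (intro mult_left_mono term_le at) auto
        finally show ?thesis using Pair by simp
      qed
      have fab: "(\<lambda>y. norm (f y)) summable_on Sigma UNIV I"
        by (rule Infinite_Sum.abs_summable_on_comparison_test'[OF majS]) (use fle in auto)
      have fsum: "f summable_on Sigma UNIV I" by (rule abs_summable_summable[OF fab])
      have fin: "((\<lambda>x. f (m, x)) has_sum k m *\<^sub>R Z m a t) (I m)" for m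
      proof -
        have "((\<lambda>x. (a ^ u m x * t ^ v m x) *\<^sub>R c m x) has_sum Z m a t) (I m)"
          using Z[of m] at unfolding rep_def by auto
        from has_sum_scaleR[OF this, of "k m"] show ?thesis
          by (simp add: f_def scaleR_scaleR mult.commute)
      qed
      have nz: "norm (k m *\<^sub>R Z m a t) \<le> g m" for m
        using rep_norm[OF Z at, of m] by (simp add: g_def mult_left_mono)
      have ns: "summable (\<lambda>m. norm (k m *\<^sub>R Z m a t))"
        by (rule summable_comparison_test[OF _ gsum]) (use nz in auto)
      have outer: "((\<lambda>m. k m *\<^sub>R Z m a t) has_sum (\<Sum>m. k m *\<^sub>R Z m a t)) UNIV"
        by (rule norm_summable_imp_has_sum[OF ns]) (rule summable_sums[OF summable_norm_cancel[OF ns]])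
      have tot: "(f has_sum (\<Sum>m. k m *\<^sub>R Z m a t)) (Sigma UNIV I)"
        by (rule has_sum_SigmaI[OF _ outer fsum]) (use fin in simp)
      have "((\<lambda>y. (a ^ w y * t ^ z y) *\<^sub>R e y) \<circ> (\<lambda>(m,x). Tx m x)) = f"
        by (auto simp: fun_eq_iff e_def w_def z_def f_def)
      then show ?thesis
        unfolding K_def by (subst has_sum_reindex[OF inj_T]) (use tot in simp)
    qed
    qed
  qed
  then show ?thesis by blast
qed

lemma has_sum_split_finite:
  fixes f :: "'b \<Rightarrow> 'a::banach"
  assumes "(f has_sum S) I" "finite F" "F \<subseteq> I"
  shows "(f has_sum (S - sum f F)) (I - F)"
proof -
  have s: "f summable_on I" using assms(1) by (rule has_sum_imp_summable)
  have "f summable_on (I - F)" by (rule summable_on_subset_banach[OF s]) blast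
  then have h: "(f has_sum infsum f (I - F)) (I - F)" by (rule has_sum_infsum)
  have "(f has_sum (sum f F + infsum f (I - F))) (F \<union> (I - F))"
    by (rule has_sum_Un_disjoint[OF has_sum_finite[OF assms(2)] h]) blast
  moreover have "F \<union> (I - F) = I" using assms(3) by blast
  ultimately have "(f has_sum (sum f F + infsum f (I - F))) I" by simp
  then have "S = sum f F + infsum f (I - F)" using assms(1) by (rule has_sum_unique[rotated])
  then have "S - sum f F = infsum f (I - F)" by simp
  then show ?thesis using h by simp
qed

lemma rep_unif:
  fixes B :: "real \<Rightarrow> real \<Rightarrow> 'a::banach"
  assumes B: "rep B r I c u v" and a: "\<bar>a\<bar> \<le> r"
  shows "uniform_limit {-r..r} (\<lambda>F s. \<Sum>x\<in>F. (a ^ u x * s ^ v x) *\<^sub>R c x) (B a) (finite_subsets_at_top I)"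
proof (rule uniform_limitI)
  fix e :: real assume e: "e > 0"
  define g where "g x = norm (c x) * r ^ (u x + v x)" for x
  have gs: "(g has_sum mj r I c u v) I" using B unfolding rep_def mj_def g_def by auto
  then have "((\<lambda>F. sum g F) \<longlongrightarrow> mj r I c u v) (finite_subsets_at_top I)" by (simp add: has_sum_def)
  then have ev1: "\<forall>\<^sub>F F in finite_subsets_at_top I. dist (sum g F) (mj r I c u v) < e"
    using e by (rule tendstoD)
  have ev2: "\<forall>\<^sub>F F in finite_subsets_at_top I. finite F \<and> F \<subseteq> I" by (rule eventually_finite_subsets_at_top_weakI) auto
  show "\<forall>\<^sub>F F in finite_subsets_at_top I. \<forall>s\<in>{-r..r}. dist (\<Sum>x\<in>F. (a ^ u x * s ^ v x) *\<^sub>R c x) (B a s) < e"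
    using ev1 ev2
  proof eventually_elim
    case (elim F)
    show ?case
    proof
      fix s assume s: "s \<in> {-r..r}"
      then have s': "\<bar>s\<bar> \<le> r" by auto
      define f where "f x = (a ^ u x * s ^ v x) *\<^sub>R c x" for x
      have fs: "(f has_sum B a s) I" using B a s' unfolding rep_def f_def by auto
      have f1: "(f has_sum (B a s - sum f F)) (I - F)"
        by (rule has_sum_split_finite[OF fs]) (use elim in auto)
      have g1: "(g has_sum (mj r I c u v - sum g F)) (I - F)"
        by (rule has_sum_split_finite[OF gs]) (use elim in auto)
      have "norm (B a s - sum f F) \<le> mj r I c u v - sum g F"
        by (rule norm_infsum_le[OF f1 g1]) (unfold f_def g_def, rule term_le[OF a s'])
      also have "\<dots> < e" using elim by (auto simp: dist_real_def)
      finally show "dist (\<Sum>x\<in>F. (a ^ u x * s ^ v x) *\<^sub>R c x) (B a s) < e"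
        by (simp add: dist_norm f_def norm_minus_commute)
    qed
  qed
qed

lemma integral_power:
  assumes "lo \<le> hi"
  shows "((\<lambda>s::real. s ^ n) has_integral (hi ^ (n+1) - lo ^ (n+1)) / real (n+1)) {lo..hi}"
proof -
  have "((\<lambda>s::real. s ^ (n+1) / (n+1)) has_real_derivative x ^ n) (at x within {lo..hi})" for x
    by (auto intro!: derivative_eq_intros simp del: power_Suc)
  then have "((\<lambda>s. s ^ n) has_integral (hi ^ (n+1) / (n+1) - lo ^ (n+1) / (n+1))) {lo..hi}"
    by (intro fundamental_theorem_of_calculus[OF assms]) (simp add: has_real_derivative_iff_has_vector_derivative)
  then show ?thesis by (simp add: diff_divide_distrib add.commute)
qed

lemma rep_integral:
  fixes B :: "real \<Rightarrow> real \<Rightarrow> 'a::banach"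
  assumes B: "rep B r I c u v" and a: "\<bar>a\<bar> \<le> r" and lh: "-r \<le> lo" "lo \<le> hi" "hi \<le> r"
  shows "((\<lambda>x. (a ^ u x * ((hi ^ (v x + 1) - lo ^ (v x + 1)) / (v x + 1))) *\<^sub>R c x) has_sum integral {lo..hi} (B a)) I"
proof -
  have ul: "uniform_limit (cbox lo hi) (\<lambda>F s. \<Sum>x\<in>F. (a ^ u x * s ^ v x) *\<^sub>R c x) (B a) (finite_subsets_at_top I)"
    by (rule uniform_limit_on_subset[OF rep_unif[OF B a]]) (use lh in auto)
  have co: "continuous_on (cbox lo hi) (\<lambda>s. \<Sum>x\<in>F. (a ^ u x * s ^ v x) *\<^sub>R c x)" for F
    by (intro continuous_intros)
  obtain Ii J where Ii: "\<And>F. ((\<lambda>s. \<Sum>x\<in>F. (a ^ u x * s ^ v x) *\<^sub>R c x) has_integral Ii F) (cbox lo hi)"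
    and J: "(B a has_integral J) (cbox lo hi)" and lim: "(Ii \<longlongrightarrow> J) (finite_subsets_at_top I)"
    using uniform_limit_integral_cbox[OF ul co] by auto
  define h where "h x = (a ^ u x * ((hi ^ (v x + 1) - lo ^ (v x + 1)) / (v x + 1))) *\<^sub>R c x" for x
  have hi: "((\<lambda>s. (a ^ u x * s ^ v x) *\<^sub>R c x) has_integral h x) {lo..hi}" for x
    unfolding h_def
    by (intro has_integral_scaleR_left has_integral_mult_right integral_power lh)
  have ev: "\<forall>\<^sub>F F in finite_subsets_at_top I. sum h F = Ii F"
  proof (rule eventually_finite_subsets_at_top_weakI)
    fix F assume F: "finite F" "F \<subseteq> I"
    have "((\<lambda>s. \<Sum>x\<in>F. (a ^ u x * s ^ v x) *\<^sub>R c x) has_integral sum h F) {lo..hi}"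
      by (rule has_integral_sum[OF F(1)]) (rule hi)
    then show "sum h F = Ii F" using Ii[of F] by (auto dest: has_integral_unique)
  qed
  have "((\<lambda>F. sum h F) \<longlongrightarrow> J) (finite_subsets_at_top I)"
    using tendsto_cong[OF ev, of J] lim by simp
  moreover have "integral {lo..hi} (B a) = J" using J by auto
  ultimately show ?thesis unfolding has_sum_def h_def by simp
qed

lemma rep_int0:
  fixes B :: "real \<Rightarrow> real \<Rightarrow> 'a::banach"
  assumes B: "rep B r I c u v"
  shows "rep (\<lambda>a t. int0 (B a) t) r I (\<lambda>x. c x /\<^sub>R real (v x + 1)) u (\<lambda>x. v x + 1)"
proof -
  have r: "r > 0" using B unfolding rep_def by auto
  have maj: "((\<lambda>x. r * (norm (c x) * r ^ (u x + v x))) has_sum (r * mj r I c u v)) I"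
    using B unfolding rep_def mj_def by (intro has_sum_cmult_right) auto
  have le: "norm (c x /\<^sub>R real (v x + 1)) * r ^ (u x + (v x + 1)) \<le> r * (norm (c x) * r ^ (u x + v x))" for x
  proof -
    have "norm (c x /\<^sub>R real (v x + 1)) \<le> norm (c x)"
      by (simp, rule mult_left_le_one_le, auto simp: inverse_le_1_iff)
    then have "norm (c x /\<^sub>R real (v x + 1)) * r ^ (u x + (v x + 1)) \<le> norm (c x) * r ^ (u x + (v x + 1))"
      using r by (intro mult_right_mono) auto
    then show ?thesis by (simp add: algebra_simps)
  qed
  show ?thesis
    unfolding rep_def
  proof (intro conjI allI impI)
    show "0 < r" by (rule r)
    show "(\<lambda>x. norm (c x /\<^sub>R real (v x + 1)) * r ^ (u x + (v x + 1))) summable_on I"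
      by (rule summable_on_comparison_test[OF has_sum_imp_summable[OF maj]]) (use le r in auto)
    fix a t :: real assume at: "\<bar>a\<bar> \<le> r" "\<bar>t\<bar> \<le> r"
    show "((\<lambda>x. (a ^ u x * t ^ (v x + 1)) *\<^sub>R (c x /\<^sub>R real (v x + 1))) has_sum int0 (B a) t) I"
    proof (cases "0 \<le> t")
      case True
      have "((\<lambda>x. (a ^ u x * ((t ^ (v x + 1) - 0 ^ (v x + 1)) / (v x + 1))) *\<^sub>R c x) has_sum integral {0..t} (B a)) I"
        by (rule rep_integral[OF B at(1)]) (use True at r in auto)
      moreover have eqf: "(\<lambda>x. (a ^ u x * ((t ^ (v x + 1) - 0 ^ (v x + 1)) / real (v x + 1))) *\<^sub>R c x) = (\<lambda>x. (a ^ u x * t ^ (v x + 1)) *\<^sub>R (c x /\<^sub>R real (v x + 1)))"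
        by (rule ext) (simp add: scaleR_scaleR divide_inverse mult.assoc)
      ultimately show ?thesis using True by (simp only: int0_def if_True eqf)
    next
      case False
      have "((\<lambda>x. (a ^ u x * ((0 ^ (v x + 1) - t ^ (v x + 1)) / (v x + 1))) *\<^sub>R c x) has_sum integral {t..0} (B a)) I"
        by (rule rep_integral[OF B at(1)]) (use False at r in auto)
      then have "((\<lambda>x. - ((a ^ u x * ((0 ^ (v x + 1) - t ^ (v x + 1)) / (v x + 1))) *\<^sub>R c x)) has_sum - integral {t..0} (B a)) I"
        by (simp add: has_sum_uminus)
      moreover have eqf: "(\<lambda>x. - ((a ^ u x * ((0 ^ (v x + 1) - t ^ (v x + 1)) / real (v x + 1))) *\<^sub>R c x)) = (\<lambda>x. (a ^ u x * t ^ (v x + 1)) *\<^sub>R (c x /\<^sub>R real (v x + 1)))"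
        by (rule ext) (simp add: scaleR_scaleR divide_inverse mult.assoc)
      ultimately show ?thesis using False by (simp only: int0_def if_False eqf)
    qed
  qed
qed

lemma rep_int0_mj:
  fixes B :: "real \<Rightarrow> real \<Rightarrow> 'a::banach"
  assumes B: "rep B r I c u v"
  shows "mj r I (\<lambda>x. c x /\<^sub>R real (v x + 1)) u (\<lambda>x. v x + 1) \<le> r * mj r I c u v"
proof -
  have r: "r > 0" using B unfolding rep_def by auto
  have maj: "((\<lambda>x. r * (norm (c x) * r ^ (u x + v x))) has_sum (r * mj r I c u v)) I"
    using B unfolding rep_def mj_def by (intro has_sum_cmult_right) auto
  have le: "norm (c x /\<^sub>R real (v x + 1)) * r ^ (u x + (v x + 1)) \<le> r * (norm (c x) * r ^ (u x + v x))" for x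
  proof -
    have "norm (c x /\<^sub>R real (v x + 1)) \<le> norm (c x)"
      by (simp, rule mult_left_le_one_le, auto simp: inverse_le_1_iff)
    then have "norm (c x /\<^sub>R real (v x + 1)) * r ^ (u x + (v x + 1)) \<le> norm (c x) * r ^ (u x + (v x + 1))"
      using r by (intro mult_right_mono) auto
    then show ?thesis by (simp add: algebra_simps)
  qed
  have "mj r I (\<lambda>x. c x /\<^sub>R real (v x + 1)) u (\<lambda>x. v x + 1) \<le> infsum (\<lambda>x. r * (norm (c x) * r ^ (u x + v x))) I"
    unfolding mj_def
    by (rule infsum_mono[OF _ has_sum_imp_summable[OF maj]])
       (use rep_int0[OF B] le in \<open>auto simp: rep_def\<close>)
  also have "\<dots> = r * mj r I c u v" using maj by (rule infsumI)
  finally show ?thesis .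
qed

definition lc :: "(nat \<Rightarrow> 'a) \<Rightarrow> ix \<Rightarrow> 'a" where
  "lc f z = (case z of Lx n \<Rightarrow> f n | _ \<Rightarrow> undefined)"
lemma lc_L[simp]: "lc f (Lx n) = f n" by (simp add: lc_def)

lemma rep_base:
  fixes A0 :: "real \<Rightarrow> 'a::banach"
  assumes an: "real_analytic A0"
  shows "\<exists>r I c u v. rep (\<lambda>a t. a *\<^sub>R A0 t) r I c u v"
proof -
  obtain R cc where R: "R > 0" and ser: "\<And>t. \<bar>t - 0\<bar> < R \<Longrightarrow> (\<lambda>n. (t - 0) ^ n *\<^sub>R cc n) sums A0 t"
    using an unfolding real_analytic_def by blast
  define t1 where "t1 = R / 2"
  define \<rho> where "\<rho> = R / 4"
  have t1: "t1 > 0" "\<bar>t1\<bar> < R" using R by (auto simp: t1_def)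
  have \<rho>: "\<rho> > 0" "\<rho> < R" "\<rho> = t1 / 2" using R by (auto simp: \<rho>_def t1_def)
  have "summable (\<lambda>n. t1 ^ n *\<^sub>R cc n)" using ser[of t1] t1 by (auto simp: sums_iff)
  then have "(\<lambda>n. t1 ^ n *\<^sub>R cc n) \<longlonglongrightarrow> 0" by (rule summable_LIMSEQ_zero)
  then have "Bseq (\<lambda>n. t1 ^ n *\<^sub>R cc n)" by (rule convergent_imp_Bseq[OF convergentI])
  then obtain K where K: "K > 0" "\<And>n. norm (t1 ^ n *\<^sub>R cc n) \<le> K" by (auto simp: Bseq_def)
  define g where "g n = norm (cc n) * \<rho> ^ (1 + n)" for n
  have gle: "g n \<le> (\<rho> * K) * (1/2) ^ n" for n
  proof -
    have e1: "\<rho> ^ (1+n) = \<rho> * (t1 ^ n * (1/2) ^ n)" by (simp add: \<rho>(3) power_divide)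
    have e2: "norm (t1 ^ n *\<^sub>R cc n) = t1 ^ n * norm (cc n)" using t1 by simp
    have "g n = \<rho> * (norm (t1 ^ n *\<^sub>R cc n) * (1/2) ^ n)"
      unfolding g_def e1 e2 by (simp only: mult_ac)
    also have "\<dots> \<le> \<rho> * (K * (1/2) ^ n)"
      using \<rho> K by (intro mult_left_mono mult_right_mono) auto
    finally show ?thesis by (simp add: mult_ac)
  qed
  have gnn: "0 \<le> g n" for n using \<rho> by (simp add: g_def)
  have gsum: "summable g"
    by (rule summable_comparison_test[of _ "\<lambda>n. (\<rho> * K) * (1/2) ^ n"])
       (use gle gnn in \<open>auto intro!: summable_mult summable_geometric\<close>)
  define I where "I = range Lx"
  define c where "c = lc cc"
  define u where "u = (\<lambda>z::ix. 1::nat)"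
  define v where "v = lc (\<lambda>n. n)"
  have inj: "inj_on Lx UNIV" by (auto simp: inj_on_def)
  have "rep (\<lambda>a t. a *\<^sub>R A0 t) \<rho> I c u v"
    unfolding rep_def
  proof (intro conjI allI impI)
    show "0 < \<rho>" by (rule \<rho>)
    have "((\<lambda>x. norm (c x) * \<rho> ^ (u x + v x)) \<circ> Lx) = g"
      by (auto simp: g_def c_def u_def v_def fun_eq_iff)
    then show "(\<lambda>x. norm (c x) * \<rho> ^ (u x + v x)) summable_on I"
      unfolding I_def by (subst summable_on_reindex[OF inj]) (use nonneg_summable_on_nat[OF gsum gnn] in simp)
    fix a t :: real assume at: "\<bar>a\<bar> \<le> \<rho>" "\<bar>t\<bar> \<le> \<rho>"
    have s1: "(\<lambda>n. t ^ n *\<^sub>R cc n) sums A0 t" using ser[of t] at \<rho> by auto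
    have s2: "(\<lambda>n. (a ^ 1 * t ^ n) *\<^sub>R cc n) sums (a *\<^sub>R A0 t)"
      using sums_scaleR_right[OF s1, of a] by (simp add: scaleR_scaleR)
    have nle: "norm ((a ^ 1 * t ^ n) *\<^sub>R cc n) \<le> g n" for n
      unfolding g_def by (rule term_le[OF at])
    have ns: "summable (\<lambda>n. norm ((a ^ 1 * t ^ n) *\<^sub>R cc n))"
      by (rule summable_comparison_test[OF _ gsum]) (use nle in auto)
    have hs: "((\<lambda>n. (a ^ 1 * t ^ n) *\<^sub>R cc n) has_sum (a *\<^sub>R A0 t)) UNIV"
      by (rule norm_summable_imp_has_sum[OF ns s2])
    have "((\<lambda>x. (a ^ u x * t ^ v x) *\<^sub>R c x) \<circ> Lx) = (\<lambda>n. (a ^ 1 * t ^ n) *\<^sub>R cc n)"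
      by (auto simp: c_def u_def v_def fun_eq_iff)
    then show "((\<lambda>x. (a ^ u x * t ^ v x) *\<^sub>R c x) has_sum a *\<^sub>R A0 t) I"
      unfolding I_def by (subst has_sum_reindex[OF inj]) (use hs in simp)
  qed
  then show ?thesis by blast
qed

lemma coef_le: "\<bar>(-1) ^ Suc j * real (Suc j) / fact (Suc j + 1)\<bar> \<le> inverse (fact j :: real)"
proof -
  have f: "(fact (Suc j + 1) :: real) = real (j + 2) * (real (j + 1) * fact j)"
    by (simp add: fact_Suc)
  have "\<bar>(-1) ^ Suc j * real (Suc j) / fact (Suc j + 1)\<bar> = real (j + 1) / (real (j + 2) * (real (j + 1) * fact j))"
    by (simp only: f abs_mult abs_divide power_abs abs_neg_one power_one_right) (simp add: add.commute)
  also have "\<dots> = inverse (real (j + 2) * fact j)"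
  proof -
    have nz: "real (j + 1) \<noteq> 0" by simp
    show ?thesis using nz by (simp add: divide_inverse inverse_mult_distrib)
  qed
  also have "\<dots> \<le> inverse (fact j)"
    by (rule le_imp_inverse_le) (auto simp: fact_ge_1)
  finally show ?thesis .
qed

lemma rep_magnus:
  fixes B :: "real \<Rightarrow> real \<Rightarrow> 'a::{real_normed_algebra,banach}"
  assumes B: "rep B r I c u v"
  shows "\<exists>I' c' u' v'. rep (\<lambda>a t. magnus_step (B a) t) r I' c' u' v'"
proof -
  define X where "X = (\<lambda>a t. int0 (B a) t)"
  note Xr = rep_int0[OF B, folded X_def]
  define MX where "MX = mj r I (\<lambda>x. c x /\<^sub>R real (v x + 1)) u (\<lambda>x. v x + 1)"
  define MB where "MB = mj r I c u v"
  have MX: "MX \<ge> 0" unfolding MX_def by (rule rep_mj_nonneg[OF Xr])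
  have MB: "MB \<ge> 0" unfolding MB_def by (rule rep_mj_nonneg[OF B])
  have h0: "\<forall>j. \<exists>K e w z. rep (\<lambda>a t. (ad (X a t) ^^ Suc j) (B a t)) r K e w z \<and> mj r K e w z \<le> (2 * MX) ^ Suc j * MB"
    using rep_adpow[OF Xr B] unfolding MX_def MB_def by blast
  obtain KK where h1: "\<forall>j. \<exists>e w z. rep (\<lambda>a t. (ad (X a t) ^^ Suc j) (B a t)) r (KK j) e w z \<and> mj r (KK j) e w z \<le> (2 * MX) ^ Suc j * MB"
    using choice[OF h0] by blast
  obtain ee where h2: "\<forall>j. \<exists>w z. rep (\<lambda>a t. (ad (X a t) ^^ Suc j) (B a t)) r (KK j) (ee j) w z \<and> mj r (KK j) (ee j) w z \<le> (2 * MX) ^ Suc j * MB"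
    using choice[OF h1] by blast
  obtain ww where h3: "\<forall>j. \<exists>z. rep (\<lambda>a t. (ad (X a t) ^^ Suc j) (B a t)) r (KK j) (ee j) (ww j) z \<and> mj r (KK j) (ee j) (ww j) z \<le> (2 * MX) ^ Suc j * MB"
    using choice[OF h2] by blast
  obtain zz where h4: "\<forall>j. rep (\<lambda>a t. (ad (X a t) ^^ Suc j) (B a t)) r (KK j) (ee j) (ww j) (zz j) \<and> mj r (KK j) (ee j) (ww j) (zz j) \<le> (2 * MX) ^ Suc j * MB"
    using choice[OF h3] by blast
  have KK: "\<And>j. rep (\<lambda>a t. (ad (X a t) ^^ Suc j) (B a t)) r (KK j) (ee j) (ww j) (zz j)"
    and KKm: "\<And>j. mj r (KK j) (ee j) (ww j) (zz j) \<le> (2 * MX) ^ Suc j * MB"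
    using h4 by auto
  define k where "k j = (-1) ^ Suc j * real (Suc j) / fact (Suc j + 1)" for j
  define b where "b j = (2 * MX * MB) * (inverse (fact j) * (2 * MX) ^ j)" for j
  have bs: "summable b" unfolding b_def by (intro summable_mult summable_exp)
  have bb: "\<bar>k j\<bar> * mj r (KK j) (ee j) (ww j) (zz j) \<le> b j" for j
  proof -
    have "\<bar>k j\<bar> * mj r (KK j) (ee j) (ww j) (zz j) \<le> inverse (fact j) * ((2 * MX) ^ Suc j * MB)"
      using coef_le[of j] KKm[of j] rep_mj_nonneg[OF KK[of j]]
      by (intro mult_mono) (auto simp: k_def)
    then show ?thesis by (simp add: b_def mult_ac)
  qed
  obtain I' c' u' v' where R: "rep (\<lambda>a t. \<Sum>j. k j *\<^sub>R (ad (X a t) ^^ Suc j) (B a t)) r I' c' u' v'"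
    using rep_series[OF KK bb bs] by blast
  have "rep (\<lambda>a t. magnus_step (B a) t) r I' c' u' v'"
    by (rule rep_cong[OF R]) (simp add: magnus_step_def X_def k_def)
  then show ?thesis by blast
qed

lemma rep_alphaA:
  fixes A0 :: "real \<Rightarrow> 'a::{real_normed_algebra,banach}"
  assumes an: "real_analytic A0"
  shows "\<exists>r I c u v. rep (\<lambda>a t. alphaA A0 a k t) r I c u v"
proof (induction k)
  case 0
  then show ?case using rep_base[OF an] by simp
next
  case (Suc k)
  then obtain r I c u v where "rep (\<lambda>a t. alphaA A0 a k t) r I c u v" by blast
  from rep_magnus[OF this] obtain I' c' u' v' where "rep (\<lambda>a t. magnus_step (alphaA A0 a k) t) r I' c' u' v'"
    by auto
  then have "rep (\<lambda>a t. alphaA A0 a (Suc k) t) r I' c' u' v'" by simp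
  then show ?case by blast
qed

lemma small_zero:
  fixes a L d :: real
  assumes d: "d > 0" and h: "\<And>s. 0 < s \<Longrightarrow> s < d \<Longrightarrow> a \<le> L * s"
  shows "a \<le> 0"
proof (rule ccontr)
  assume "\<not> a \<le> 0"
  then have a: "a > 0" by simp
  define s where "s = min (d/2) (a / (2 * (\<bar>L\<bar> + 1)))"
  have s0: "0 < s" using a d by (simp add: s_def)
  have sd: "s < d" using d by (simp add: s_def)
  have "a \<le> L * s" by (rule h[OF s0 sd])
  also have "\<dots> \<le> (\<bar>L\<bar> + 1) * s" using s0 by (intro mult_right_mono) auto
  also have "\<dots> \<le> (\<bar>L\<bar> + 1) * (a / (2 * (\<bar>L\<bar> + 1)))"
    by (intro mult_left_mono) (auto simp: s_def)
  also have "\<dots> = a / 2"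
  proof -
    have "\<bar>L\<bar> + 1 \<noteq> 0" by arith
    then show ?thesis by (simp add: field_simps)
  qed
  finally show False using a by simp
qed

lemma pow_shift:
  fixes s \<rho> :: real
  assumes "0 \<le> s" "s \<le> \<rho>" "m \<le> n"
  shows "s ^ n \<le> s ^ m * \<rho> ^ (n - m)"
proof -
  obtain k where n: "n = m + k" using assms(3) le_Suc_ex by blast
  have "s ^ n = s ^ m * s ^ k" by (simp add: n power_add)
  also have "\<dots> \<le> s ^ m * \<rho> ^ k" using assms by (intro mult_left_mono power_mono) auto
  finally show ?thesis by (simp add: n)
qed

lemma gen_bound:
  fixes f :: "'i \<Rightarrow> 'a::banach" and h :: "'i \<Rightarrow> real"
  assumes fS: "(f has_sum S) A" and hs: "h summable_on J" and AJ: "A \<subseteq> J"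
    and hnn: "\<And>x. x \<in> J \<Longrightarrow> 0 \<le> h x" and le: "\<And>x. x \<in> A \<Longrightarrow> norm (f x) \<le> L * h x" and L: "0 \<le> L"
  shows "norm S \<le> L * infsum h J"
proof -
  have hA: "h summable_on A" by (rule summable_on_subset_banach[OF hs AJ])
  have "((\<lambda>x. L * h x) has_sum L * infsum h A) A"
    by (rule has_sum_cmult_right) (use hA in simp)
  then have "norm S \<le> L * infsum h A"
    by (rule norm_infsum_le[OF fS]) (rule le)
  also have "infsum h A \<le> infsum h J"
    by (rule infsum_mono_neutral[OF hA hs]) (use AJ hnn in auto)
  then have "L * infsum h A \<le> L * infsum h J" using L by (rule mult_left_mono)
  finally show ?thesis .
qed

lemma fam_summable:
  fixes g :: "'i \<Rightarrow> 'a::banach" and w :: "'i \<Rightarrow> nat"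
  assumes gs: "(\<lambda>x. norm (g x) * \<rho> ^ w x) summable_on J" and s: "0 \<le> s" "s \<le> \<rho>" and AJ: "A \<subseteq> J"
  shows "(\<lambda>x. s ^ w x *\<^sub>R g x) summable_on A"
proof -
  have gA: "(\<lambda>x. norm (g x) * \<rho> ^ w x) summable_on A" by (rule summable_on_subset_banach[OF gs AJ])
  have "(\<lambda>x. norm (s ^ w x *\<^sub>R g x)) summable_on A"
  proof (rule Infinite_Sum.abs_summable_on_comparison_test'[OF gA])
    show "norm (s ^ w x *\<^sub>R g x) \<le> norm (g x) * \<rho> ^ w x" for x
      using s by (simp add: mult.commute mult_left_mono power_mono)
  qed
  then show ?thesis by (rule abs_summable_summable)
qed

lemma id1:
  fixes g :: "'i \<Rightarrow> 'a::banach" and w :: "'i \<Rightarrow> nat"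
  assumes \<rho>: "\<rho> > 0" and gs: "(\<lambda>x. norm (g x) * \<rho> ^ w x) summable_on J"
    and \<delta>: "0 < \<delta>" "\<delta> \<le> \<rho>"
    and bnd: "\<And>s. 0 < s \<Longrightarrow> s < \<delta> \<Longrightarrow> norm (infsum (\<lambda>x. s ^ w x *\<^sub>R g x) J) \<le> K * s ^ p"
  shows "j < p \<Longrightarrow> infsum g {x\<in>J. w x = j} = 0"
proof -
  define M where "M = infsum (\<lambda>x. norm (g x) * \<rho> ^ w x) J"
  have Mnn: "0 \<le> M" unfolding M_def by (intro infsum_nonneg) (use \<rho> in auto)
  have Q: "j \<le> p \<Longrightarrow> (\<forall>s. 0 < s \<and> s < \<delta> \<longrightarrow> norm (infsum (\<lambda>x. s ^ w x *\<^sub>R g x) {x\<in>J. j \<le> w x}) \<le> K * s ^ p)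
            \<and> (\<forall>i<j. infsum g {x\<in>J. w x = i} = 0)" for j
  proof (induction j)
    case 0
    then show ?case using bnd by simp
  next
    case (Suc j)
    then have IH: "\<And>s. 0 < s \<Longrightarrow> s < \<delta> \<Longrightarrow> norm (infsum (\<lambda>x. s ^ w x *\<^sub>R g x) {x\<in>J. j \<le> w x}) \<le> K * s ^ p"
      and IH2: "\<forall>i<j. infsum g {x\<in>J. w x = i} = 0" and jp: "Suc j \<le> p" by auto
    define E where "E = {x\<in>J. w x = j}"
    define G where "G = {x\<in>J. Suc j \<le> w x}"
    have JEG: "{x\<in>J. j \<le> w x} = E \<union> G" "E \<inter> G = {}" by (auto simp: E_def G_def)
    define Gj where "Gj = infsum g E"
    have split: "infsum (\<lambda>x. s ^ w x *\<^sub>R g x) {x\<in>J. j \<le> w x} = s ^ j *\<^sub>R Gj + infsum (\<lambda>x. s ^ w x *\<^sub>R g x) G"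
      if s: "0 < s" "s < \<delta>" for s
    proof -
      have sE: "(\<lambda>x. s ^ w x *\<^sub>R g x) summable_on E"
        by (rule fam_summable[OF gs]) (use s \<delta> in \<open>auto simp: E_def\<close>)
      have sG: "(\<lambda>x. s ^ w x *\<^sub>R g x) summable_on G"
        by (rule fam_summable[OF gs]) (use s \<delta> in \<open>auto simp: G_def\<close>)
      have "infsum (\<lambda>x. s ^ w x *\<^sub>R g x) E = infsum (\<lambda>x. s ^ j *\<^sub>R g x) E"
        by (rule infsum_cong) (simp add: E_def)
      also have "\<dots> = s ^ j *\<^sub>R Gj" by (simp add: infsum_scaleR_right Gj_def)
      finally show ?thesis unfolding JEG(1) by (simp add: infsum_Un_disjoint[OF sE sG JEG(2)])
    qed
    have tail: "norm (infsum (\<lambda>x. s ^ w x *\<^sub>R g x) G) \<le> (s ^ Suc j / \<rho> ^ Suc j) * M"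
      if s: "0 < s" "s < \<delta>" for s
      unfolding M_def
    proof (rule gen_bound[OF has_sum_infsum gs])
      show "(\<lambda>x. s ^ w x *\<^sub>R g x) summable_on G"
        by (rule fam_summable[OF gs]) (use s \<delta> in \<open>auto simp: G_def\<close>)
      show "G \<subseteq> J" by (auto simp: G_def)
      show "0 \<le> norm (g x) * \<rho> ^ w x" for x using \<rho> by simp
      show "0 \<le> s ^ Suc j / \<rho> ^ Suc j" using s \<rho> by simp
      fix x assume x: "x \<in> G"
      have "s ^ w x \<le> s ^ Suc j * \<rho> ^ (w x - Suc j)"
        by (rule pow_shift) (use s \<delta> x in \<open>auto simp: G_def\<close>)
      also have "\<rho> ^ (w x - Suc j) = \<rho> ^ w x / \<rho> ^ Suc j"
        using x \<rho> by (simp add: G_def power_diff)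
      finally have sw: "s ^ w x \<le> s ^ Suc j / \<rho> ^ Suc j * \<rho> ^ w x" by simp
      have eq: "norm (s ^ w x *\<^sub>R g x) = s ^ w x * norm (g x)" using s by simp
      have eq2: "s ^ Suc j / \<rho> ^ Suc j * (norm (g x) * \<rho> ^ w x) = (s ^ Suc j / \<rho> ^ Suc j * \<rho> ^ w x) * norm (g x)"
        by (simp only: mult_ac)
      show "norm (s ^ w x *\<^sub>R g x) \<le> s ^ Suc j / \<rho> ^ Suc j * (norm (g x) * \<rho> ^ w x)"
        unfolding eq eq2 by (rule mult_right_mono[OF sw norm_ge_zero])
    qed
    define M' where "M' = M / \<rho> ^ Suc j"
    have M': "0 \<le> M'" using Mnn \<rho> by (simp add: M'_def)
    have Gj0: "Gj = 0"
    proof -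
      have "norm Gj \<le> (\<bar>K\<bar> + M') * s" if s: "0 < s" "s < min \<delta> 1" for s
      proof -
        have s': "0 < s" "s < \<delta>" "s < 1" using s by auto
        have "norm (s ^ j *\<^sub>R Gj) \<le> norm (infsum (\<lambda>x. s ^ w x *\<^sub>R g x) {x\<in>J. j \<le> w x}) + norm (infsum (\<lambda>x. s ^ w x *\<^sub>R g x) G)"
          unfolding split[OF s'(1,2)] by (metis add_diff_cancel_right' norm_triangle_ineq4)
        also have "\<dots> \<le> K * s ^ p + (s ^ Suc j / \<rho> ^ Suc j) * M"
          using IH[OF s'(1,2)] tail[OF s'(1,2)] by simp
        also have "\<dots> = s ^ j * (K * s ^ (p - j) + s * M')"
        proof -
          have "s ^ p = s ^ j * s ^ (p - j)" using jp by (simp add: power_add[symmetric])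
          then show ?thesis by (simp add: M'_def algebra_simps)
        qed
        finally have "s ^ j * norm Gj \<le> s ^ j * (K * s ^ (p - j) + s * M')" using s' by simp
        then have "norm Gj \<le> K * s ^ (p - j) + s * M'" using s' by simp
        also have "K * s ^ (p - j) \<le> \<bar>K\<bar> * s"
        proof -
          have "s ^ (p - j) \<le> s ^ 1" by (rule power_decreasing) (use jp s' in auto)
          then have "\<bar>K\<bar> * s ^ (p - j) \<le> \<bar>K\<bar> * s" by (simp add: mult_left_mono)
          moreover have "K * s ^ (p - j) \<le> \<bar>K\<bar> * s ^ (p - j)" using s' by (intro mult_right_mono) auto
          ultimately show ?thesis by linarith
        qed
        finally show ?thesis by (simp add: algebra_simps)
      qed
      then have "norm Gj \<le> 0" by (intro small_zero[of "min \<delta> 1"]) (use \<delta> in auto)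
      then show ?thesis by simp
    qed
    show ?case
    proof (intro conjI allI impI)
      fix s assume s: "0 < s \<and> s < \<delta>"
      have "infsum (\<lambda>x. s ^ w x *\<^sub>R g x) {x\<in>J. Suc j \<le> w x} = infsum (\<lambda>x. s ^ w x *\<^sub>R g x) {x\<in>J. j \<le> w x}"
        using split[of s] s Gj0 by (simp add: G_def)
      then show "norm (infsum (\<lambda>x. s ^ w x *\<^sub>R g x) {x\<in>J. Suc j \<le> w x}) \<le> K * s ^ p"
        using IH[of s] s by simp
    next
      fix i assume "i < Suc j"
      then show "infsum g {x\<in>J. w x = i} = 0"
        using IH2 Gj0 by (cases "i = j") (auto simp: Gj_def E_def)
    qed
  qed
  assume "j < p"
  then show ?thesis using Q[of "Suc j"] by auto
qed

lemma rep_swap: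
  assumes B: "rep B r I c u v"
  shows "rep (\<lambda>a t. B t a) r I c v u"
  unfolding rep_def
proof (intro conjI allI impI)
  show "0 < r" using B by (simp add: rep_def)
  have e: "(\<lambda>x. norm (c x) * r ^ (v x + u x)) = (\<lambda>x. norm (c x) * r ^ (u x + v x))"
    by (simp add: add.commute)
  show "(\<lambda>x. norm (c x) * r ^ (v x + u x)) summable_on I" unfolding e using B by (simp add: rep_def)
  fix a t :: real assume "\<bar>a\<bar> \<le> r" "\<bar>t\<bar> \<le> r"
  then have h: "((\<lambda>x. (t ^ u x * a ^ v x) *\<^sub>R c x) has_sum B t a) I" using B by (simp add: rep_def)
  have e2: "(\<lambda>x. (a ^ v x * t ^ u x) *\<^sub>R c x) = (\<lambda>x. (t ^ u x * a ^ v x) *\<^sub>R c x)"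
    by (simp add: mult.commute)
  show "((\<lambda>x. (a ^ v x * t ^ u x) *\<^sub>R c x) has_sum B t a) I" unfolding e2 by (rule h)
qed

lemma fib_summable:
  fixes c :: "ix \<Rightarrow> 'a::banach"
  assumes B: "rep B r I c u v" and A: "A \<subseteq> I" and Af: "\<And>x. x \<in> A \<Longrightarrow> u x + v x = n"
  shows "(\<lambda>x. norm (c x)) summable_on A"
proof -
  have r: "r > 0" using B by (simp add: rep_def)
  have s: "(\<lambda>x. norm (c x) * r ^ (u x + v x)) summable_on A"
    by (rule summable_on_subset_banach[of _ I]) (use B A in \<open>auto simp: rep_def\<close>)
  have s2: "(\<lambda>x. (1 / r ^ n) * (norm (c x) * r ^ (u x + v x))) summable_on A"
    by (rule summable_on_cmult_right[OF s])
  show ?thesis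
  proof (rule summable_on_cong[THEN iffD1, OF _ s2])
    show "1 / r ^ n * (norm (c x) * r ^ (u x + v x)) = norm (c x)" if "x \<in> A" for x
      using Af[OF that] r by simp
  qed
qed

lemma vanish1:
  fixes B :: "real \<Rightarrow> real \<Rightarrow> 'a::banach"
  assumes B: "rep B r I c u v" and \<delta>: "0 < \<delta>" "\<delta> \<le> r"
    and bnd: "\<And>a t. 0 < a \<Longrightarrow> a < \<delta> \<Longrightarrow> 0 < t \<Longrightarrow> t < \<delta> \<Longrightarrow> norm (B a t) \<le> C * a ^ q * t ^ p"
    and i: "i < q"
  shows "infsum c {x\<in>I. u x = i \<and> v x = j} = 0"
proof -
  have r: "r > 0" using B by (simp add: rep_def)
  have maj: "(\<lambda>x. norm (c x) * r ^ (u x + v x)) summable_on I" using B by (simp add: rep_def)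
  have step1: "infsum (\<lambda>x. t ^ v x *\<^sub>R c x) {x\<in>I. u x = i} = 0" if t: "0 < t" "t < \<delta>" for t
  proof (rule id1[where \<rho>=r and \<delta>=\<delta> and K="C * t ^ p" and p=q, OF r _ \<delta> _ i])
    show "(\<lambda>x. norm (t ^ v x *\<^sub>R c x) * r ^ u x) summable_on I"
    proof (rule summable_on_comparison_test[OF maj])
      show "norm (t ^ v x *\<^sub>R c x) * r ^ u x \<le> norm (c x) * r ^ (u x + v x)" for x
      proof -
        have "t ^ v x \<le> r ^ v x" using t \<delta> by (intro power_mono) auto
        then have "t ^ v x * (norm (c x) * r ^ u x) \<le> r ^ v x * (norm (c x) * r ^ u x)"
          using r by (intro mult_right_mono) auto
        then show ?thesis using t by (simp add: power_add mult_ac)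
      qed
      show "0 \<le> norm (t ^ v x *\<^sub>R c x) * r ^ u x" for x using r by simp
    qed
    fix s assume s: "0 < s" "s < \<delta>"
    have "((\<lambda>x. (s ^ u x * t ^ v x) *\<^sub>R c x) has_sum B s t) I"
      using B s t \<delta> by (auto simp: rep_def)
    then have "infsum (\<lambda>x. s ^ u x *\<^sub>R t ^ v x *\<^sub>R c x) I = B s t"
      by (simp add: infsumI)
    then show "norm (infsum (\<lambda>x. s ^ u x *\<^sub>R t ^ v x *\<^sub>R c x) I) \<le> C * t ^ p * s ^ q"
      using bnd[OF s t] by (simp add: mult_ac)
  qed
  define J where "J = {x\<in>I. u x = i}"
  have "infsum c {x\<in>J. v x = j} = 0"
  proof (rule id1[where \<rho>=r and \<delta>=\<delta> and K=0 and p="Suc j", OF r _ \<delta>])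
    have s: "(\<lambda>x. norm (c x) * r ^ (u x + v x)) summable_on J"
      by (rule summable_on_subset_banach[OF maj]) (auto simp: J_def)
    have s2: "(\<lambda>x. (1 / r ^ i) * (norm (c x) * r ^ (u x + v x))) summable_on J"
      by (rule summable_on_cmult_right[OF s])
    show "(\<lambda>x. norm (c x) * r ^ v x) summable_on J"
    proof (rule summable_on_cong[THEN iffD1, OF _ s2])
      show "1 / r ^ i * (norm (c x) * r ^ (u x + v x)) = norm (c x) * r ^ v x" if "x \<in> J" for x
        using that r by (simp add: J_def power_add)
    qed
    show "norm (infsum (\<lambda>x. s ^ v x *\<^sub>R c x) J) \<le> 0 * s ^ Suc j" if "0 < s" "s < \<delta>" for s
      using step1[OF that] by (simp add: J_def)
  qed simp
  moreover have "{x\<in>J. v x = j} = {x\<in>I. u x = i \<and> v x = j}" by (auto simp: J_def)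
  ultimately show ?thesis by simp
qed

lemma vanish:
  fixes B :: "real \<Rightarrow> real \<Rightarrow> 'a::banach"
  assumes B: "rep B r I c u v" and \<delta>: "0 < \<delta>" "\<delta> \<le> r"
    and bnd: "\<And>a t. 0 < a \<Longrightarrow> a < \<delta> \<Longrightarrow> 0 < t \<Longrightarrow> t < \<delta> \<Longrightarrow> norm (B a t) \<le> C * a ^ q * t ^ p"
    and low: "i < q \<or> j < p"
  shows "infsum c {x\<in>I. u x = i \<and> v x = j} = 0"
proof (cases "i < q")
  case True
  show ?thesis by (rule vanish1[OF B \<delta> bnd True])
next
  case False
  then have j: "j < p" using low by auto
  have bnd': "norm (B t a) \<le> C * a ^ p * t ^ q" if "0 < a" "a < \<delta>" "0 < t" "t < \<delta>" for a t
    using bnd[OF that(3,4,1,2)] by (simp add: mult_ac)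
  have "infsum c {x\<in>I. v x = j \<and> u x = i} = 0"
    by (rule vanish1[OF rep_swap[OF B] \<delta> bnd' j])
  moreover have "{x\<in>I. v x = j \<and> u x = i} = {x\<in>I. u x = i \<and> v x = j}" by auto
  ultimately show ?thesis by simp
qed

lemma rep_high:
  fixes B :: "real \<Rightarrow> real \<Rightarrow> 'a::banach"
  assumes B: "rep B r I c u v" and D: "\<And>i j. i < q \<or> j < p \<Longrightarrow> infsum c {x\<in>I. u x = i \<and> v x = j} = 0"
  shows "rep B r {x\<in>I. q \<le> u x \<and> p \<le> v x} c u v"
  unfolding rep_def
proof (intro conjI allI impI)
  show r: "0 < r" using B by (simp add: rep_def)
  show "(\<lambda>x. norm (c x) * r ^ (u x + v x)) summable_on {x\<in>I. q \<le> u x \<and> p \<le> v x}"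
    by (rule summable_on_subset_banach[of _ I]) (use B in \<open>auto simp: rep_def\<close>)
  fix a t :: real assume at: "\<bar>a\<bar> \<le> r" "\<bar>t\<bar> \<le> r"
  define f where "f x = (a ^ u x * t ^ v x) *\<^sub>R c x" for x
  define Ih where "Ih = {x\<in>I. q \<le> u x \<and> p \<le> v x}"
  define Il where "Il = {x\<in>I. \<not> (q \<le> u x \<and> p \<le> v x)}"
  have fI: "(f has_sum B a t) I" using B at unfolding rep_def f_def by auto
  have fs: "f summable_on I" using fI by (rule has_sum_imp_summable)
  have fl: "f summable_on Il" by (rule summable_on_subset_banach[OF fs]) (auto simp: Il_def)
  have fh: "f summable_on Ih" by (rule summable_on_subset_banach[OF fs]) (auto simp: Ih_def)
  define Low where "Low = {(i, j). i < q \<or> j < p}"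
  define fib where "fib k = {x\<in>I. u x = fst k \<and> v x = snd k}" for k :: "nat \<times> nat"
  define Sig where "Sig = Sigma Low fib"
  have img: "snd ` Sig = Il"
  proof
    show "snd ` Sig \<subseteq> Il" by (auto simp: Sig_def Low_def fib_def Il_def)
    show "Il \<subseteq> snd ` Sig"
    proof
      fix x assume x: "x \<in> Il"
      then have "((u x, v x), x) \<in> Sig" by (auto simp: Sig_def Low_def fib_def Il_def)
      then show "x \<in> snd ` Sig" by force
    qed
  qed
  have inj: "inj_on snd Sig"
    by (auto simp: inj_on_def Sig_def fib_def)
  have "(f has_sum infsum f Il) Il" using fl by simp
  then have h1: "((f \<circ> snd) has_sum infsum f Il) Sig"
    unfolding img[symmetric] by (subst (asm) has_sum_reindex[OF inj])
  have h2: "((\<lambda>x. (f \<circ> snd) (k, x)) has_sum 0) (fib k)" if k: "k \<in> Low" for k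
  proof -
    obtain i j where kij: "k = (i, j)" by (cases k)
    have cs: "(\<lambda>x. norm (c x)) summable_on fib k"
      by (rule fib_summable[OF B, where n="i + j"]) (auto simp: fib_def kij)
    have "(c has_sum infsum c (fib k)) (fib k)"
      using abs_summable_summable[OF cs] by simp
    moreover have "infsum c (fib k) = 0" using D[of i j] k by (simp add: fib_def kij Low_def)
    ultimately have "(c has_sum 0) (fib k)" by simp
    from has_sum_scaleR[OF this, of "a ^ i * t ^ j"]
    have "((\<lambda>x. (a ^ i * t ^ j) *\<^sub>R c x) has_sum 0) (fib k)" by simp
    then show ?thesis
      by (rule has_sum_cong[THEN iffD1, rotated]) (auto simp: f_def fib_def kij)
  qed
  have "((\<lambda>k. 0) has_sum infsum f Il) Low"
    by (rule has_sum_SigmaD[OF h1[unfolded Sig_def] h2])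
  moreover have "((\<lambda>k. 0) has_sum 0) Low" by simp
  ultimately have l0: "infsum f Il = 0" by (rule has_sum_unique)
  have "(f has_sum (infsum f Ih + infsum f Il)) (Ih \<union> Il)"
    by (rule has_sum_Un_disjoint) (use fh fl in \<open>auto simp: Ih_def Il_def\<close>)
  moreover have "Ih \<union> Il = I" by (auto simp: Ih_def Il_def)
  ultimately have "(f has_sum infsum f Ih) I" using l0 by simp
  then have "infsum f Ih = B a t" using fI by (rule has_sum_unique)
  then have "(f has_sum B a t) Ih" using has_sum_infsum[OF fh] by simp
  then show "((\<lambda>x. (a ^ u x * t ^ v x) *\<^sub>R c x) has_sum B a t) {x\<in>I. q \<le> u x \<and> p \<le> v x}"
    by (simp add: f_def[abs_def] Ih_def)
qed

lemma term2:
  fixes y :: "'a::real_normed_vector"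
  assumes r: "r > 0" and a: "\<bar>a\<bar> \<le> r" and t: "\<bar>t\<bar> \<le> r" and mU: "m \<le> U" and nV: "n \<le> V"
  shows "norm ((a ^ U * t ^ V) *\<^sub>R y) \<le> (\<bar>a\<bar> ^ m * \<bar>t\<bar> ^ n / r ^ (m + n)) * (norm y * r ^ (U + V))"
proof -
  have pa: "\<bar>a\<bar> ^ U \<le> \<bar>a\<bar> ^ m * r ^ (U - m)" by (rule pow_shift) (use a mU in auto)
  have pt: "\<bar>t\<bar> ^ V \<le> \<bar>t\<bar> ^ n * r ^ (V - n)" by (rule pow_shift) (use t nV in auto)
  have "\<bar>a\<bar> ^ U * \<bar>t\<bar> ^ V \<le> (\<bar>a\<bar> ^ m * r ^ (U - m)) * (\<bar>t\<bar> ^ n * r ^ (V - n))"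
    by (intro mult_mono pa pt) (use r in auto)
  also have "\<dots> = (\<bar>a\<bar> ^ m * \<bar>t\<bar> ^ n) * r ^ ((U - m) + (V - n))"
    by (simp add: power_add mult_ac)
  also have "r ^ ((U - m) + (V - n)) = r ^ (U + V) / r ^ (m + n)"
    using mU nV r by (simp add: power_diff[symmetric])
  finally have "\<bar>a\<bar> ^ U * \<bar>t\<bar> ^ V \<le> (\<bar>a\<bar> ^ m * \<bar>t\<bar> ^ n) * (r ^ (U + V) / r ^ (m + n))" .
  then have "(\<bar>a\<bar> ^ U * \<bar>t\<bar> ^ V) * norm y \<le> ((\<bar>a\<bar> ^ m * \<bar>t\<bar> ^ n) * (r ^ (U + V) / r ^ (m + n))) * norm y"
    by (rule mult_right_mono) simp
  then show ?thesis by (simp add: abs_mult power_abs mult_ac)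
qed


definition Dp :: "ix set \<Rightarrow> (ix \<Rightarrow> 'a::real_normed_vector) \<Rightarrow> (ix \<Rightarrow> nat) \<Rightarrow> (ix \<Rightarrow> nat) \<Rightarrow> nat \<Rightarrow> real \<Rightarrow> 'a" where
  "Dp I c u v p a = infsum (\<lambda>x. a ^ u x *\<^sub>R c x) {x\<in>I. v x = p}"

lemma ge1:
  fixes F :: "real \<Rightarrow> real \<Rightarrow> 'a::banach"
  assumes F: "rep F r I c u v" and H: "\<And>x. x \<in> I \<Longrightarrow> q \<le> u x \<and> p \<le> v x"
    and a: "\<bar>a\<bar> \<le> r" and t: "\<bar>t\<bar> \<le> r"
  shows "norm (F a t) \<le> (\<bar>a\<bar> ^ q * \<bar>t\<bar> ^ p / r ^ (q + p)) * mj r I c u v"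
  unfolding mj_def
proof (rule gen_bound)
  have r: "r > 0" using F by (simp add: rep_def)
  show "((\<lambda>x. (a ^ u x * t ^ v x) *\<^sub>R c x) has_sum F a t) I" using F a t by (simp add: rep_def)
  show "(\<lambda>x. norm (c x) * r ^ (u x + v x)) summable_on I" using F by (simp add: rep_def)
  show "I \<subseteq> I" by simp
  show "0 \<le> norm (c x) * r ^ (u x + v x)" for x using r by simp
  show "0 \<le> \<bar>a\<bar> ^ q * \<bar>t\<bar> ^ p / r ^ (q + p)" using r by simp
  show "norm ((a ^ u x * t ^ v x) *\<^sub>R c x) \<le> \<bar>a\<bar> ^ q * \<bar>t\<bar> ^ p / r ^ (q + p) * (norm (c x) * r ^ (u x + v x))"
    if "x \<in> I" for x
    by (rule term2[OF r a t]) (use H[OF that] in auto)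
qed

lemma ge3_term:
  fixes y :: "'a::real_normed_vector"
  assumes r: "r > 0" and a: "\<bar>a\<bar> \<le> r" and qU: "q \<le> U"
  shows "norm (a ^ U *\<^sub>R y) \<le> (\<bar>a\<bar> ^ q / r ^ (q + p)) * (norm y * r ^ (U + p))"
proof -
  have pa: "\<bar>a\<bar> ^ U \<le> \<bar>a\<bar> ^ q * r ^ (U - q)" by (rule pow_shift) (use a qU in auto)
  also have "r ^ (U - q) = r ^ (U + p) / r ^ (q + p)"
    using qU r by (simp add: power_diff[symmetric])
  finally have "\<bar>a\<bar> ^ U \<le> \<bar>a\<bar> ^ q * (r ^ (U + p) / r ^ (q + p))" .
  then have "\<bar>a\<bar> ^ U * norm y \<le> (\<bar>a\<bar> ^ q * (r ^ (U + p) / r ^ (q + p))) * norm y"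
    by (rule mult_right_mono) simp
  then show ?thesis by (simp add: power_abs mult_ac)
qed

lemma ge3:
  fixes F :: "real \<Rightarrow> real \<Rightarrow> 'a::banach"
  assumes F: "rep F r I c u v" and H: "\<And>x. x \<in> I \<Longrightarrow> q \<le> u x \<and> p \<le> v x"
    and a: "\<bar>a\<bar> \<le> r"
  shows "((\<lambda>x. a ^ u x *\<^sub>R c x) has_sum Dp I c u v p a) {x\<in>I. v x = p}"
    and "norm (Dp I c u v p a) \<le> (\<bar>a\<bar> ^ q / r ^ (q + p)) * mj r I c u v"
proof -
  have r: "r > 0" using F by (simp add: rep_def)
  define E where "E = {x\<in>I. v x = p}"
  define L where "L = \<bar>a\<bar> ^ q / r ^ (q + p)"
  have L: "0 \<le> L" using r by (simp add: L_def)
  have maj: "(\<lambda>x. norm (c x) * r ^ (u x + v x)) summable_on I" using F by (simp add: rep_def)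
  have majE: "(\<lambda>x. L * (norm (c x) * r ^ (u x + v x))) summable_on E"
    by (rule summable_on_cmult_right, rule summable_on_subset_banach[OF maj]) (auto simp: E_def)
  have le: "norm (a ^ u x *\<^sub>R c x) \<le> L * (norm (c x) * r ^ (u x + v x))" if "x \<in> E" for x
    using ge3_term[OF r a, of q "u x" "c x" p] H[of x] that by (auto simp: E_def L_def)
  have ab: "(\<lambda>x. norm (a ^ u x *\<^sub>R c x)) summable_on E"
    by (rule Infinite_Sum.abs_summable_on_comparison_test'[OF majE]) (use le in auto)
  have hs: "((\<lambda>x. a ^ u x *\<^sub>R c x) has_sum Dp I c u v p a) E"
    using abs_summable_summable[OF ab] by (simp add: Dp_def E_def)
  then show "((\<lambda>x. a ^ u x *\<^sub>R c x) has_sum Dp I c u v p a) {x\<in>I. v x = p}" by (simp add: E_def)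
  show "norm (Dp I c u v p a) \<le> (\<bar>a\<bar> ^ q / r ^ (q + p)) * mj r I c u v"
    unfolding mj_def L_def[symmetric]
    by (rule gen_bound[OF hs maj _ _ le L]) (use r in \<open>auto simp: E_def\<close>)
qed

lemma ge2:
  fixes F :: "real \<Rightarrow> real \<Rightarrow> 'a::banach"
  assumes F: "rep F r I c u v" and H: "\<And>x. x \<in> I \<Longrightarrow> q \<le> u x \<and> p \<le> v x"
    and a: "\<bar>a\<bar> \<le> r" and t: "\<bar>t\<bar> \<le> r"
  shows "norm (F a t - t ^ p *\<^sub>R Dp I c u v p a) \<le> (\<bar>a\<bar> ^ q * \<bar>t\<bar> ^ (p + 1) / r ^ (q + (p + 1))) * mj r I c u v"
proof -
  have r: "r > 0" using F by (simp add: rep_def)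
  define E where "E = {x\<in>I. v x = p}"
  define G where "G = {x\<in>I. p + 1 \<le> v x}"
  define f where "f = (\<lambda>x. (a ^ u x * t ^ v x) *\<^sub>R c x)"
  have fI: "(f has_sum F a t) I" using F a t by (simp add: rep_def f_def)
  have fs: "f summable_on I" using fI by (rule has_sum_imp_summable)
  have fG: "(f has_sum infsum f G) G"
    using summable_on_subset_banach[OF fs, of G] by (auto simp: G_def)
  have fE: "(f has_sum t ^ p *\<^sub>R Dp I c u v p a) E"
  proof -
    have "((\<lambda>x. t ^ p *\<^sub>R (a ^ u x *\<^sub>R c x)) has_sum t ^ p *\<^sub>R Dp I c u v p a) E"
      using has_sum_scaleR[OF ge3(1)[OF F H a], of "t ^ p"] by (simp add: E_def)
    then show ?thesis
      by (rule has_sum_cong[THEN iffD1, rotated]) (auto simp: f_def E_def mult.commute)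
  qed
  have "(f has_sum (t ^ p *\<^sub>R Dp I c u v p a + infsum f G)) (E \<union> G)"
    by (rule has_sum_Un_disjoint[OF fE fG]) (auto simp: E_def G_def)
  moreover have "E \<union> G = I" using H by (force simp: E_def G_def)
  ultimately have "(f has_sum (t ^ p *\<^sub>R Dp I c u v p a + infsum f G)) I" by simp
  then have "F a t = t ^ p *\<^sub>R Dp I c u v p a + infsum f G" using fI by (rule has_sum_unique[rotated])
  then have eq: "F a t - t ^ p *\<^sub>R Dp I c u v p a = infsum f G" by simp
  show ?thesis
    unfolding eq mj_def
  proof (rule gen_bound[OF fG])
    show "(\<lambda>x. norm (c x) * r ^ (u x + v x)) summable_on I" using F by (simp add: rep_def)
    show "G \<subseteq> I" by (auto simp: G_def)
    show "0 \<le> norm (c x) * r ^ (u x + v x)" for x using r by simp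
    show "0 \<le> \<bar>a\<bar> ^ q * \<bar>t\<bar> ^ (p + 1) / r ^ (q + (p + 1))" using r by simp
    show "norm (f x) \<le> \<bar>a\<bar> ^ q * \<bar>t\<bar> ^ (p + 1) / r ^ (q + (p + 1)) * (norm (c x) * r ^ (u x + v x))"
      if "x \<in> G" for x
      unfolding f_def by (rule term2[OF r a t]) (use H[of x] that in \<open>auto simp: G_def\<close>)
  qed
qed


lemma norm_ad:
  fixes x y :: "'a::real_normed_algebra"
  shows "norm (ad x y) \<le> 2 * norm x * norm y"
proof -
  have "norm (ad x y) \<le> norm (x * y) + norm (y * x)" unfolding ad_def by (rule norm_triangle_ineq4)
  also have "\<dots> \<le> norm x * norm y + norm y * norm x" by (intro add_mono norm_mult_ineq)
  finally show ?thesis by simp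
qed

lemma norm_adpow:
  fixes x y :: "'a::real_normed_algebra"
  shows "norm ((ad x ^^ n) y) \<le> (2 * norm x) ^ n * norm y"
proof (induction n)
  case 0
  then show ?case by simp
next
  case (Suc n)
  have "norm ((ad x ^^ Suc n) y) = norm (ad x ((ad x ^^ n) y))" by simp
  also have "\<dots> \<le> 2 * norm x * norm ((ad x ^^ n) y)" by (rule norm_ad)
  also have "\<dots> \<le> 2 * norm x * ((2 * norm x) ^ n * norm y)"
    by (rule mult_left_mono[OF Suc.IH]) simp
  finally show ?case by (simp add: mult_ac)
qed

lemma magnus_bound:
  fixes X Y :: "'a::{real_normed_algebra,banach}"
  assumes X: "norm X \<le> 1/4"
  shows "norm (\<Sum>j. ((-1) ^ Suc j * real (Suc j) / fact (Suc j + 1)) *\<^sub>R (ad X ^^ Suc j) Y)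
           \<le> norm (ad X Y) / 2 + 2 * (2 * norm X) ^ 2 * norm Y"
proof -
  define k where "k j = (-1) ^ Suc j * real (Suc j) / fact (Suc j + 1)" for j :: nat
  define f where "f j = k j *\<^sub>R (ad X ^^ Suc j) Y" for j
  define x where "x = 2 * norm X"
  have x: "0 \<le> x" "x \<le> 1/2" using X by (auto simp: x_def)
  have k1: "\<bar>k j\<bar> \<le> 1" for j
  proof -
    have "\<bar>k j\<bar> \<le> inverse (fact j)" unfolding k_def by (rule coef_le)
    also have "\<dots> \<le> 1" using fact_ge_1[of j, where 'a=real] by (simp add: inverse_le_1_iff)
    finally show ?thesis .
  qed
  have fle: "norm (f j) \<le> x ^ Suc j * norm Y" for j
  proof -
    have "norm (f j) = \<bar>k j\<bar> * norm ((ad X ^^ Suc j) Y)" by (simp add: f_def)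
    also have "\<dots> \<le> 1 * ((2 * norm X) ^ Suc j * norm Y)"
      by (intro mult_mono k1 norm_adpow) auto
    finally show ?thesis by (simp add: x_def)
  qed
  have gs: "summable (\<lambda>j. (x * norm Y) * x ^ j)"
    by (intro summable_mult summable_geometric) (use x in auto)
  have ns: "summable (\<lambda>j. norm (f j))"
    by (rule summable_comparison_test[OF _ gs]) (use fle in \<open>auto simp: mult_ac\<close>)
  have fs: "summable f" by (rule summable_norm_cancel[OF ns])
  have gs2: "summable (\<lambda>j. (x ^ 2 * norm Y) * x ^ j)"
    by (intro summable_mult summable_geometric) (use x in auto)
  have fle2: "norm (f (Suc j)) \<le> (x ^ 2 * norm Y) * x ^ j" for j
    using fle[of "Suc j"] by (simp add: power_add mult_ac power2_eq_square)
  have ns2: "summable (\<lambda>j. norm (f (Suc j)))"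
    by (rule summable_comparison_test[OF _ gs2]) (use fle2 in auto)
  have "norm (\<Sum>j. f (Suc j)) \<le> (\<Sum>j. norm (f (Suc j)))" by (rule summable_norm[OF ns2])
  also have "\<dots> \<le> (\<Sum>j. (x ^ 2 * norm Y) * x ^ j)" by (rule suminf_le[OF fle2 ns2 gs2])
  also have "\<dots> = (x ^ 2 * norm Y) * (1 / (1 - x))"
    by (subst suminf_mult) (use x in \<open>auto simp: suminf_geometric\<close>)
  also have "\<dots> \<le> (x ^ 2 * norm Y) * 2"
  proof (rule mult_left_mono)
    show "1 / (1 - x) \<le> 2" using x by (simp add: divide_le_eq)
  qed simp
  finally have tail: "norm (\<Sum>j. f (Suc j)) \<le> 2 * x ^ 2 * norm Y" by (simp add: mult_ac)
  have f0: "f 0 = (- 1/2) *\<^sub>R ad X Y" by (simp add: f_def k_def)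
  have "suminf f = f 0 + (\<Sum>j. f (Suc j))" using suminf_split_head[OF fs] by simp
  then have "norm (suminf f) \<le> norm (f 0) + norm (\<Sum>j. f (Suc j))" by (simp add: norm_triangle_ineq)
  also have "\<dots> \<le> norm (ad X Y) / 2 + 2 * x ^ 2 * norm Y" using tail by (simp add: f0)
  finally have "norm (suminf f) \<le> norm (ad X Y) / 2 + 2 * (2 * norm X) ^ 2 * norm Y" by (simp add: x_def)
  moreover have "suminf f = (\<Sum>j. ((-1) ^ Suc j * real (Suc j) / fact (Suc j + 1)) *\<^sub>R (ad X ^^ Suc j) Y)"
    by (simp only: f_def[abs_def] k_def)
  ultimately show ?thesis by simp
qed


lemma adXY_bound:
  fixes D X1 Y1 :: "'a::real_normed_algebra"
  shows "norm (ad (\<tau> *\<^sub>R D + X1) (s *\<^sub>R D + Y1)) / 2 \<le> \<bar>\<tau>\<bar> * norm D * norm Y1 + norm X1 * norm (s *\<^sub>R D + Y1)"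
proof -
  have eq: "ad (\<tau> *\<^sub>R D + X1) (s *\<^sub>R D + Y1) = ad (\<tau> *\<^sub>R D) Y1 + ad X1 (s *\<^sub>R D + Y1)"
    by (simp add: ad_def algebra_simps)
  have "norm (ad (\<tau> *\<^sub>R D + X1) (s *\<^sub>R D + Y1)) \<le> norm (ad (\<tau> *\<^sub>R D) Y1) + norm (ad X1 (s *\<^sub>R D + Y1))"
    unfolding eq by (rule norm_triangle_ineq)
  also have "\<dots> \<le> 2 * norm (\<tau> *\<^sub>R D) * norm Y1 + 2 * norm X1 * norm (s *\<^sub>R D + Y1)"
    by (intro add_mono norm_ad)
  finally show ?thesis by simp
qed

lemma final_ineq:
  fixes A T nX nY nD nY1 nX1 ta K1 K2 KX1 KX2 :: real
  assumes A: "0 \<le> A" "A \<le> 1" and T: "0 \<le> T" "T \<le> 1"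
    and nn: "0 \<le> nX" "0 \<le> nY" "0 \<le> nD" "0 \<le> nY1" "0 \<le> nX1" "0 \<le> ta" "0 \<le> K1" "0 \<le> K2" "0 \<le> KX1" "0 \<le> KX2"
    and hY: "nY \<le> K1 * (A ^ q * T ^ p)" and hD: "nD \<le> K1 * A ^ q" and hY1: "nY1 \<le> K2 * (A ^ q * T ^ (p + 1))"
    and hX: "nX \<le> KX1 * (A ^ q * T ^ (p + 1))" and hX1: "nX1 \<le> KX2 * (A ^ q * T ^ (p + 2))"
    and hta: "ta \<le> T ^ (p + 1)"
  shows "ta * nD * nY1 + nX1 * nY + 2 * (2 * nX) ^ 2 * nY \<le> (K1 * K2 + KX2 * K1 + 8 * KX1 ^ 2 * K1) * A ^ (2 * q) * T ^ (2 * p + 2)"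
proof -
  define W where "W = (A ^ q * A ^ q) * (T ^ (p + 1) * T ^ (p + 1))"
  have pA: "A ^ (2 * q) = A ^ q * A ^ q" by (simp add: mult_2 power_add)
  have pT: "T ^ (2 * p + 2) = T ^ (p + 1) * T ^ (p + 1)"
    by (simp add: power_add[symmetric] mult_2)
  have pT2: "T ^ (p + 2) * T ^ p = T ^ (p + 1) * T ^ (p + 1)"
    by (simp add: power_add[symmetric])
  have Aq: "0 \<le> A ^ q" "A ^ q \<le> 1" using A by (auto intro: power_le_one)
  have Tp: "0 \<le> T ^ p" "T ^ p \<le> 1" using T by (auto intro: power_le_one)
  have mq: "A ^ q * T ^ p \<le> 1" using Aq Tp by (simp add: mult_le_one)
  have t1: "ta * nD * nY1 \<le> T ^ (p + 1) * (K1 * A ^ q) * (K2 * (A ^ q * T ^ (p + 1)))"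
    by (intro mult_mono hta hD hY1) (use nn A T in auto)
  have t1': "T ^ (p + 1) * (K1 * A ^ q) * (K2 * (A ^ q * T ^ (p + 1))) = K1 * K2 * W"
    by (simp add: W_def mult_ac)
  have t2: "nX1 * nY \<le> (KX2 * (A ^ q * T ^ (p + 2))) * (K1 * (A ^ q * T ^ p))"
    by (intro mult_mono hX1 hY) (use nn A T in auto)
  have t2': "(KX2 * (A ^ q * T ^ (p + 2))) * (K1 * (A ^ q * T ^ p)) = KX2 * K1 * W"
  proof -
    have "(KX2 * (A ^ q * T ^ (p + 2))) * (K1 * (A ^ q * T ^ p)) = KX2 * K1 * (A ^ q * A ^ q) * (T ^ (p + 2) * T ^ p)"
      by (simp add: mult_ac)
    then show ?thesis unfolding pT2 W_def by (simp add: mult_ac)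
  qed
  have nX2: "nX ^ 2 \<le> (KX1 * (A ^ q * T ^ (p + 1))) ^ 2"
    by (rule power_mono[OF hX nn(1)])
  have nY': "nY \<le> K1" using hY mq nn by (metis mult_left_le order_trans)
  have t3: "nX ^ 2 * nY \<le> (KX1 * (A ^ q * T ^ (p + 1))) ^ 2 * K1"
    by (intro mult_mono nX2 nY') (use nn in auto)
  have t3': "(KX1 * (A ^ q * T ^ (p + 1))) ^ 2 * K1 = KX1 ^ 2 * K1 * W"
    by (simp add: W_def power2_eq_square mult_ac)
  have "ta * nD * nY1 + nX1 * nY + 2 * (2 * nX) ^ 2 * nY = ta * nD * nY1 + nX1 * nY + 8 * (nX ^ 2 * nY)"
    by (simp add: power2_eq_square)
  also have "\<dots> \<le> K1 * K2 * W + KX2 * K1 * W + 8 * (KX1 ^ 2 * K1 * W)"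
    using t1 t1' t2 t2' t3 t3' by linarith
  also have "\<dots> = (K1 * K2 + KX2 * K1 + 8 * KX1 ^ 2 * K1) * A ^ (2 * q) * T ^ (2 * p + 2)"
    unfolding pA pT W_def by (simp add: algebra_simps)
  finally show ?thesis .
qed

theorem lemma2:
  fixes A0 :: "real \<Rightarrow> 'a::{real_normed_algebra,banach}"
    and k q p :: nat
  assumes findim: "\<exists>B::'a set. finite B \<and> span B = UNIV"
    and analytic: "real_analytic A0"
    and hyp: "bigO_at0 (\<lambda>\<alpha> t. alphaA A0 \<alpha> k t) q p"
  shows "bigO_at0 (\<lambda>\<alpha> t. alphaA A0 \<alpha> (Suc k) t) (2 * q) (2 * p + 2)"
proof -
  define B where "B = (\<lambda>a t. alphaA A0 a k t)"
  obtain r I c u v where R: "rep B r I c u v" using rep_alphaA[OF analytic] unfolding B_def by blast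
  have r: "r > 0" using R by (simp add: rep_def)
  obtain C where ev: "\<forall>\<^sub>F x in nhds (0::real, 0::real). norm (B (fst x) (snd x)) \<le> C * \<bar>fst x\<bar> ^ q * \<bar>snd x\<bar> ^ p"
    using hyp unfolding bigO_at0_def B_def by blast
  then obtain d where d: "d > 0"
    and dH: "\<And>y. dist y (0::real, 0::real) < d \<Longrightarrow> norm (B (fst y) (snd y)) \<le> C * \<bar>fst y\<bar> ^ q * \<bar>snd y\<bar> ^ p"
    unfolding eventually_nhds_metric by blast
  have box: "norm (B a t) \<le> C * \<bar>a\<bar> ^ q * \<bar>t\<bar> ^ p" if "\<bar>a\<bar> < d/2" "\<bar>t\<bar> < d/2" for a t
  proof -
    have "dist (a, t) (0, 0) = sqrt ((dist a 0)\<^sup>2 + (dist t 0)\<^sup>2)" by (rule dist_Pair_Pair)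
    also have "\<dots> \<le> \<bar>dist a 0\<bar> + \<bar>dist t 0\<bar>" by (rule sqrt_sum_squares_le_sum_abs)
    also have "\<dots> < d" using that by simp
    finally show ?thesis using dH[of "(a, t)"] by simp
  qed
  define \<delta> where "\<delta> = min (d/2) r"
  have \<delta>: "0 < \<delta>" "\<delta> \<le> r" using d r by (auto simp: \<delta>_def)
  have bnd: "norm (B a t) \<le> C * a ^ q * t ^ p" if "0 < a" "a < \<delta>" "0 < t" "t < \<delta>" for a t
    using box[of a t] that by (simp add: \<delta>_def)
  have Dz: "infsum c {x\<in>I. u x = i \<and> v x = j} = 0" if "i < q \<or> j < p" for i j
    by (rule vanish[OF R \<delta> bnd that])
  define Ih where "Ih = {x\<in>I. q \<le> u x \<and> p \<le> v x}"
  have Rh: "rep B r Ih c u v" unfolding Ih_def by (rule rep_high[OF R Dz])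
  have H: "q \<le> u x \<and> p \<le> v x" if "x \<in> Ih" for x using that by (simp add: Ih_def)
  define c' where "c' x = c x /\<^sub>R real (v x + 1)" for x
  define v' where "v' x = v x + 1" for x
  have RX: "rep (\<lambda>a t. int0 (B a) t) r Ih c' u v'"
    using rep_int0[OF Rh] unfolding c'_def[abs_def] v'_def[abs_def] .
  have HX: "q \<le> u x \<and> p + 1 \<le> v' x" if "x \<in> Ih" for x using H[OF that] by (simp add: v'_def)
  define M where "M = mj r Ih c u v"
  define MX where "MX = mj r Ih c' u v'"
  have M: "0 \<le> M" unfolding M_def by (rule rep_mj_nonneg[OF Rh])
  have MX: "0 \<le> MX" unfolding MX_def by (rule rep_mj_nonneg[OF RX])
  define K1 where "K1 = M / r ^ (q + p)"
  define K2 where "K2 = M / r ^ (q + (p + 1))"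
  define KX1 where "KX1 = MX / r ^ (q + (p + 1))"
  define KX2 where "KX2 = MX / r ^ (q + (p + 1 + 1))"
  have Ks: "0 \<le> K1" "0 \<le> K2" "0 \<le> KX1" "0 \<le> KX2"
    using M MX r by (auto simp: K1_def K2_def KX1_def KX2_def)
  define Cf where "Cf = K1 * K2 + KX2 * K1 + 8 * KX1 ^ 2 * K1"
  define \<epsilon> where "\<epsilon> = min (min r 1) (1 / (4 * KX1 + 1))"
  have \<epsilon>: "0 < \<epsilon>" "\<epsilon> \<le> r" "\<epsilon> \<le> 1" "\<epsilon> \<le> 1 / (4 * KX1 + 1)"
    using r Ks by (auto simp: \<epsilon>_def)
  have main: "norm (alphaA A0 a (Suc k) t) \<le> Cf * \<bar>a\<bar> ^ (2 * q) * \<bar>t\<bar> ^ (2 * p + 2)"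
    if a: "\<bar>a\<bar> < \<epsilon>" and t: "\<bar>t\<bar> < \<epsilon>" for a t
  proof -
    have ar: "\<bar>a\<bar> \<le> r" and tr: "\<bar>t\<bar> \<le> r" using a t \<epsilon> by auto
    have a1: "\<bar>a\<bar> \<le> 1" and t1: "\<bar>t\<bar> \<le> 1" using a t \<epsilon> by auto
    define X where "X = int0 (B a) t"
    define Y where "Y = B a t"
    define D where "D = Dp Ih c u v p a"
    define DX where "DX = Dp Ih c' u v' (p + 1) a"
    define \<tau> where "\<tau> = t ^ (p + 1) / real (p + 1)"
    have e1: "norm Y \<le> K1 * (\<bar>a\<bar> ^ q * \<bar>t\<bar> ^ p)"
      using ge1[OF Rh H ar tr] by (simp add: Y_def K1_def M_def mult_ac)
    have e3: "norm D \<le> K1 * \<bar>a\<bar> ^ q"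
      using ge3(2)[OF Rh H ar] by (simp add: D_def K1_def M_def mult_ac)
    have e2: "norm (Y - t ^ p *\<^sub>R D) \<le> K2 * (\<bar>a\<bar> ^ q * \<bar>t\<bar> ^ (p + 1))"
      using ge2[OF Rh H ar tr] by (simp add: Y_def D_def K2_def M_def mult_ac)
    have e4: "norm X \<le> KX1 * (\<bar>a\<bar> ^ q * \<bar>t\<bar> ^ (p + 1))"
      using ge1[OF RX HX ar tr] by (simp add: X_def KX1_def MX_def mult_ac)
    have e5: "norm (X - t ^ (p + 1) *\<^sub>R DX) \<le> KX2 * (\<bar>a\<bar> ^ q * \<bar>t\<bar> ^ (p + 1 + 1))"
      using ge2[OF RX HX ar tr] by (simp add: X_def DX_def KX2_def MX_def mult_ac)
    have eD: "t ^ (p + 1) *\<^sub>R DX = \<tau> *\<^sub>R D"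
    proof -
      have "DX = infsum (\<lambda>x. (1 / real (p + 1)) *\<^sub>R (a ^ u x *\<^sub>R c x)) {x\<in>Ih. v x = p}"
        unfolding DX_def Dp_def
        by (rule infsum_cong_neutral) (auto simp: v'_def c'_def divide_inverse)
      also have "\<dots> = (1 / real (p + 1)) *\<^sub>R D"
        unfolding D_def Dp_def by (rule infsum_scaleR_right)
      finally show ?thesis by (simp add: \<tau>_def scaleR_scaleR)
    qed
    define X1 where "X1 = X - \<tau> *\<^sub>R D"
    define Y1 where "Y1 = Y - t ^ p *\<^sub>R D"
    have XX: "X = \<tau> *\<^sub>R D + X1" and YY: "Y = t ^ p *\<^sub>R D + Y1" by (simp_all add: X1_def Y1_def)
    have nX: "norm X \<le> 1/4"
    proof -
      have "\<bar>a\<bar> ^ q * \<bar>t\<bar> ^ (p + 1) \<le> \<bar>t\<bar>"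
      proof -
        have h1: "\<bar>a\<bar> ^ q \<le> 1" using a1 by (simp add: power_le_one)
        have h2: "\<bar>t\<bar> ^ (p + 1) \<le> \<bar>t\<bar> ^ 1" by (rule power_decreasing) (use t1 in auto)
        have "\<bar>a\<bar> ^ q * \<bar>t\<bar> ^ (p + 1) \<le> 1 * \<bar>t\<bar> ^ (p + 1)" by (rule mult_right_mono[OF h1]) simp
        then show ?thesis using h2 by simp
      qed
      then have "norm X \<le> KX1 * \<bar>t\<bar>" using e4 Ks by (meson mult_left_mono order_trans)
      also have "\<dots> \<le> KX1 * (1 / (4 * KX1 + 1))" using t \<epsilon> Ks by (intro mult_left_mono) auto
      also have "\<dots> \<le> 1/4" using Ks by (simp add: field_simps)
      finally show ?thesis .
    qed
    have "alphaA A0 a (Suc k) t = (\<Sum>j. ((-1) ^ Suc j * real (Suc j) / fact (Suc j + 1)) *\<^sub>R (ad X ^^ Suc j) Y)"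
      by (simp add: magnus_step_def X_def Y_def B_def)
    then have "norm (alphaA A0 a (Suc k) t) \<le> norm (ad X Y) / 2 + 2 * (2 * norm X) ^ 2 * norm Y"
      using magnus_bound[OF nX] by simp
    also have "norm (ad X Y) / 2 \<le> \<bar>\<tau>\<bar> * norm D * norm Y1 + norm X1 * norm Y"
      using adXY_bound[of \<tau> D X1 "t ^ p" Y1] unfolding XX[symmetric] YY[symmetric] .
    finally have fin: "norm (alphaA A0 a (Suc k) t) \<le> \<bar>\<tau>\<bar> * norm D * norm Y1 + norm X1 * norm Y + 2 * (2 * norm X) ^ 2 * norm Y"
      by simp
    have hta: "\<bar>\<tau>\<bar> \<le> \<bar>t\<bar> ^ (p + 1)"
    proof -
      have "\<bar>\<tau>\<bar> = \<bar>t\<bar> ^ (p + 1) / real (p + 1)" by (simp only: \<tau>_def abs_divide power_abs abs_of_nat)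
      also have "\<dots> \<le> \<bar>t\<bar> ^ (p + 1) / 1" by (rule divide_left_mono) auto
      finally show ?thesis by simp
    qed
    have hY1: "norm Y1 \<le> K2 * (\<bar>a\<bar> ^ q * \<bar>t\<bar> ^ (p + 1))" using e2 by (simp add: Y1_def)
    have hX1: "norm X1 \<le> KX2 * (\<bar>a\<bar> ^ q * \<bar>t\<bar> ^ (p + 2))" using e5 eD by (simp add: X1_def)
    have "\<bar>\<tau>\<bar> * norm D * norm Y1 + norm X1 * norm Y + 2 * (2 * norm X) ^ 2 * norm Y
          \<le> (K1 * K2 + KX2 * K1 + 8 * KX1 ^ 2 * K1) * \<bar>a\<bar> ^ (2 * q) * \<bar>t\<bar> ^ (2 * p + 2)"
      by (rule final_ineq[OF _ a1 _ t1 _ _ _ _ _ _ Ks e1 e3 hY1 e4 hX1 hta]) auto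
    with fin show ?thesis by (simp add: Cf_def)
  qed
  show ?thesis
    unfolding bigO_at0_def
  proof (intro exI[of _ Cf])
    show "\<forall>\<^sub>F x in nhds (0::real, 0::real). norm (alphaA A0 (fst x) (Suc k) (snd x)) \<le> Cf * \<bar>fst x\<bar> ^ (2 * q) * \<bar>snd x\<bar> ^ (2 * p + 2)"
      unfolding eventually_nhds
    proof (intro exI conjI ballI)
      show "open ({-\<epsilon><..<\<epsilon>} \<times> {-\<epsilon><..<\<epsilon>})" by (intro open_Times) auto
      show "(0::real, 0::real) \<in> {-\<epsilon><..<\<epsilon>} \<times> {-\<epsilon><..<\<epsilon>}" using \<epsilon> by auto
      fix x :: "real \<times> real" assume "x \<in> {-\<epsilon><..<\<epsilon>} \<times> {-\<epsilon><..<\<epsilon>}"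
      then have "\<bar>fst x\<bar> < \<epsilon>" "\<bar>snd x\<bar> < \<epsilon>" by (auto simp: mem_Times_iff abs_less_iff)
      then show "norm (alphaA A0 (fst x) (Suc k) (snd x)) \<le> Cf * \<bar>fst x\<bar> ^ (2 * q) * \<bar>snd x\<bar> ^ (2 * p + 2)"
        by (rule main)
    qed
  qed
qed

end
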